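(* Let $G=\langle S_k\mid K\rangle$ be a finitely generated semigroup as described in the context with $K$ primitive, and suppose there is $m$ with $m=\sum_{j=1}^kK(s_i,s_j)$ for every $1\le i\le k$. Let $\mathcal{A}$ be a finite alphabet and $X=X_{\mathbf{A}}$ a hom Markov tree shift on $G$. Then the topological entropy exists and \[\lim_{n\to\infty}\frac{\log p_n}{|\Delta_n|}=h^{(s)}(X).\]
   Context: Let $K$ be a $k\times k$ matrix with entries in $\{0,1\}$ indexed by $S_k=\{s_1,\dots,s_k\}$, and let $G=\langle S_k\mid K\rangle$ be the semigroup generated by $S_k$ subject to the relations $s_is_j=1_G$ if and only if $K(s_i,s_j)=0$ ($1_G$ the identity). Every $g\in G$ has a unique minimal representation $g=g_1g_2\cdots g_n$ with $g_l\in S_k$ and $K(g_l,g_{l+1})=1$; its length is $|g|=n$ (with $|1_G|=0$). For $n\ge0$, $\Delta_n=\{h\in G:|h|\le n\}$, and for $g\in G$ the $n$-semiball is $\bar{\Delta}^{(g)}_n=\{gh: h\in G,\ |h|\le n,\ |gh|=|g|+|h|\}$. For a finite alphabet $\mathcal{A}$, a pattern is a map $u:H\to\mathcal{A}$ with $H\subset G$ finite; $u$ is accepted by $t\in\mathcal{A}^G$ if there is $g\in G$ with $t_{gh}=u_h$ for all $h\in H$. For $X\subseteq\mathcal{A}^G$, $p_n$ is the number of patterns $u\in\mathcal{A}^{\Delta_n}$ accepted by some $t\in X$, and $p^{(g)}_n$ the number of patterns $u\in\mathcal{A}^{\bar{\Delta}^{(g)}_n}$ accepted by some $t\in X$. Given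 a $k$-tuple $\mathbf{A}=(A_1,\dots,A_k)$ of $\{0,1\}$-matrices indexed by $\mathcal{A}$, the Markov tree shift is $X_{\mathbf{A}}=\{t\in\mathcal{A}^G: A_i(t_g,t_{gs_i})=1 \text{ for all } g\in G \text{ and } i \text{ with } |gs_i|=|g|+1\}$; it is a hom Markov tree shift if $A_1=A_2=\cdots=A_k$. The $i$th stem entropy is $h^{(s_i)}(X)=\limsup_{n\to\infty}\log p^{(s_i)}_n/|\bar{\Delta}^{(s_i)}_n|$; since $K$ is primitive these coincide, and $h^{(s)}(X)$ denotes their common value. A nonnegative square matrix is primitive if some power has all entries positive. *)

theory Defs
  imports "HOL-Analysis.Analysis" "HOL-Library.FuncSet"
begin

text \<open>Generators s_1..s_k are encoded as indices 0..k-1; the adjacency matrix K is a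
Boolean relation (K i j = True iff K(s_i,s_j) = 1). Elements of G are their unique minimal
representations, i.e. words (lists of generator indices) with K-admissible adjacent letters;
the empty word is the identity 1_G.\<close>

definition sgG :: "nat \<Rightarrow> (nat \<Rightarrow> nat \<Rightarrow> bool) \<Rightarrow> nat list set" where
  "sgG k K = {w. set w \<subseteq> {..<k} \<and> (\<forall>l. Suc l < length w \<longrightarrow> K (w ! l) (w ! Suc l))}"

text \<open>Product in G: concatenate, cancelling s_i s_j = 1 whenever K(s_i,s_j) = 0.\<close>
function sgmult :: "(nat \<Rightarrow> nat \<Rightarrow> bool) \<Rightarrow> nat list \<Rightarrow> nat list \<Rightarrow> nat list" where
  "sgmult K g h =
     (if g = [] \<or> h = [] then g @ h
      else if K (last g) (hd h) then g @ h
      else sgmult K (butlast g) (tl h))"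
  by auto
termination by (relation "Wellfounded.measure (\<lambda>(K, g, h). length h)") auto

definition Delta :: "nat \<Rightarrow> (nat \<Rightarrow> nat \<Rightarrow> bool) \<Rightarrow> nat \<Rightarrow> nat list set" where
  "Delta k K n = {h \<in> sgG k K. length h \<le> n}"

definition semiball :: "nat \<Rightarrow> (nat \<Rightarrow> nat \<Rightarrow> bool) \<Rightarrow> nat list \<Rightarrow> nat \<Rightarrow> nat list set" where
  "semiball k K g n = {sgmult K g h | h. h \<in> sgG k K \<and> length h \<le> n \<and>
                        length (sgmult K g h) = length g + length h}"

fun kpow :: "nat \<Rightarrow> (nat \<Rightarrow> nat \<Rightarrow> bool) \<Rightarrow> nat \<Rightarrow> nat \<Rightarrow> nat \<Rightarrow> nat" where
  "kpow k K 0 i j = (if i = j then 1 else 0)"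
| "kpow k K (Suc n) i j = (\<Sum>l<k. kpow k K n i l * (if K l j then 1 else 0))"

definition primitive_mat :: "nat \<Rightarrow> (nat \<Rightarrow> nat \<Rightarrow> bool) \<Rightarrow> bool" where
  "primitive_mat k K \<longleftrightarrow> (\<exists>N>0. \<forall>i<k. \<forall>j<k. kpow k K N i j > 0)"

text \<open>Markov tree shift X_A for a k-tuple of 0/1 matrices over the alphabet 'a
(A i x y = True iff A_{i+1}(x,y) = 1).\<close>
definition markov_tree_shift ::
  "nat \<Rightarrow> (nat \<Rightarrow> nat \<Rightarrow> bool) \<Rightarrow> (nat \<Rightarrow> 'a \<Rightarrow> 'a \<Rightarrow> bool) \<Rightarrow> (nat list \<Rightarrow> 'a) set" where
  "markov_tree_shift k K A = {t. \<forall>g \<in> sgG k K. \<forall>i<k.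
      length (sgmult K g [i]) = length g + 1 \<longrightarrow> A i (t g) (t (sgmult K g [i]))}"

definition accepted_patterns ::
  "nat \<Rightarrow> (nat \<Rightarrow> nat \<Rightarrow> bool) \<Rightarrow> (nat list \<Rightarrow> 'a) set \<Rightarrow> nat list set \<Rightarrow> (nat list \<Rightarrow> 'a) set" where
  "accepted_patterns k K X H =
     {u. \<exists>t \<in> X. \<exists>g \<in> sgG k K. u = restrict (\<lambda>h. t (sgmult K g h)) H}"

definition pn :: "nat \<Rightarrow> (nat \<Rightarrow> nat \<Rightarrow> bool) \<Rightarrow> (nat list \<Rightarrow> 'a) set \<Rightarrow> nat \<Rightarrow> nat" where
  "pn k K X n = card (accepted_patterns k K X (Delta k K n))"

definition pn_semi :: "nat \<Rightarrow> (nat \<Rightarrow> nat \<Rightarrow> bool) \<Rightarrow> (nat list \<Rightarrow> 'a) set \<Rightarrow> nat list \<Rightarrow> nat \<Rightarrow> nat" where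
  "pn_semi k K X g n = card (accepted_patterns k K X (semiball k K g n))"

definition stem_entropy :: "nat \<Rightarrow> (nat \<Rightarrow> nat \<Rightarrow> bool) \<Rightarrow> (nat list \<Rightarrow> 'a) set \<Rightarrow> nat list \<Rightarrow> ereal" where
  "stem_entropy k K X g =
     limsup (\<lambda>n. ereal (ln (real (pn_semi k K X g n)) / real (card (semiball k K g n))))"

end

theory Submission
  imports Defs
begin

lemma sgG_Nil[simp]: "[] \<in> sgG k K"
  by (simp add: sgG_def)

lemma sgG_Cons: "(x # y \<in> sgG k K) = (x < k \<and> y \<in> sgG k K \<and> (y = [] \<or> K x (hd y)))"
proof
  assume a: "x # y \<in> sgG k K"
  have y: "y \<in> sgG k K"
    using a unfolding sgG_def by (auto simp: nth_Cons_Suc)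
  show "x < k \<and> y \<in> sgG k K \<and> (y = [] \<or> K x (hd y))"
  proof (cases y)
    case Nil then show ?thesis using a by (auto simp: sgG_def)
  next
    case (Cons a' l)
    from a have "K ((x#y) ! 0) ((x#y) ! Suc 0)" unfolding sgG_def using Cons by auto
    then show ?thesis using a y Cons by (auto simp: sgG_def)
  qed
next
  assume a: "x < k \<and> y \<in> sgG k K \<and> (y = [] \<or> K x (hd y))"
  show "x # y \<in> sgG k K"
    unfolding sgG_def
  proof (intro CollectI conjI allI impI)
    show "set (x # y) \<subseteq> {..<k}" using a by (auto simp: sgG_def)
  next
    fix l assume l: "Suc l < length (x # y)"
    show "K ((x # y) ! l) ((x # y) ! Suc l)"
    proof (cases l)
      case 0 then show ?thesis using a l by (cases y) auto
    next
      case (Suc l') then show ?thesis using a l by (auto simp: sgG_def)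
    qed
  qed
qed

lemma sgG_append: "(w @ y \<in> sgG k K) = (w \<in> sgG k K \<and> y \<in> sgG k K \<and> (w = [] \<or> y = [] \<or> K (last w) (hd y)))"
proof (induction w)
  case Nil then show ?case by simp
next
  case (Cons a w)
  show ?case
  proof (cases "w = []")
    case True then show ?thesis by (cases y) (auto simp: sgG_Cons)
  next
    case False
    then have "hd (w @ y) = hd w" by simp
    then show ?thesis using False Cons.IH by (auto simp: sgG_Cons)
  qed
qed

lemma sgG_butlast: "w \<in> sgG k K \<Longrightarrow> butlast w \<in> sgG k K"
  by (metis append_butlast_last_id butlast.simps(1) sgG_append)

lemma sgG_last: "w \<in> sgG k K \<Longrightarrow> w \<noteq> [] \<Longrightarrow> last w < k"
  by (metis append_butlast_last_id sgG_Cons sgG_append)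

lemma sgG_snoc: "(w @ [x] \<in> sgG k K) = (w \<in> sgG k K \<and> x < k \<and> (w = [] \<or> K (last w) x))"
  by (auto simp: sgG_append sgG_Cons)

lemma sgmult_Nil_left[simp]: "sgmult K [] h = h"
  by (subst sgmult.simps) simp

lemma sgmult_Nil_right[simp]: "sgmult K g [] = g"
  by (subst sgmult.simps) simp

lemma sgmult_Cons: "g \<noteq> [] \<Longrightarrow> sgmult K g (x # y) =
   (if K (last g) x then g @ x # y else sgmult K (butlast g) y)"
  by (subst sgmult.simps) simp

lemma sgmult_in: "g \<in> sgG k K \<Longrightarrow> h \<in> sgG k K \<Longrightarrow> sgmult K g h \<in> sgG k K"
proof (induction h arbitrary: g)
  case Nil then show ?case by simp
next
  case (Cons x y)
  show ?case
  proof (cases "g = []")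
    case True then show ?thesis using Cons by simp
  next
    case False
    show ?thesis
    proof (cases "K (last g) x")
      case True then show ?thesis using False Cons.prems
        by (simp add: sgmult_Cons sgG_append)
    next
      case f2: False
      have "y \<in> sgG k K" using Cons.prems sgG_Cons by blast
      then show ?thesis using False f2 Cons.IH[of "butlast g"] Cons.prems sgG_butlast
        by (simp add: sgmult_Cons)
    qed
  qed
qed

lemma sgmult_single:
  assumes "g \<in> sgG k K" "i < k"
  shows "length (sgmult K g [i]) = length g + 1 \<longleftrightarrow> (g = [] \<or> K (last g) i)"
proof (cases "g = []")
  case True then show ?thesis by simp
next
  case False then show ?thesis by (auto simp: sgmult_Cons)
qed

lemma sgmult_single_eq: "g = [] \<or> K (last g) i \<Longrightarrow> sgmult K g [i] = g @ [i]"
  by (cases "g = []") (auto simp: sgmult_Cons)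

lemma sgmult_assoc_i: "y = [] \<or> K i (hd y) \<Longrightarrow> sgmult K g (i # y) = sgmult K (sgmult K g [i]) y"
proof (cases "g = []")
  case True
  assume "y = [] \<or> K i (hd y)"
  then show ?thesis using True
    by (cases y) (auto simp: sgmult_Cons)
next
  case False
  assume a: "y = [] \<or> K i (hd y)"
  show ?thesis
  proof (cases "K (last g) i")
    case True then show ?thesis using False a
      by (cases y) (auto simp: sgmult_Cons)
  next
    case f2: False then show ?thesis using False by (simp add: sgmult_Cons)
  qed
qed

lemma mts_iff: "t \<in> markov_tree_shift k K A \<longleftrightarrow>
   (\<forall>g \<in> sgG k K. \<forall>i<k. (g = [] \<or> K (last g) i) \<longrightarrow> A i (t g) (t (g @ [i])))"
  unfolding markov_tree_shift_def
  using sgmult_single sgmult_single_eq by auto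

locale TS =
  fixes k :: nat and K :: "nat \<Rightarrow> nat \<Rightarrow> bool" and m :: nat and A0 :: "'a::finite \<Rightarrow> 'a \<Rightarrow> bool"
  assumes k_pos: "1 \<le> k" and rows: "\<And>i. i < k \<Longrightarrow> card {j. j < k \<and> K i j} = m" and m_pos: "1 \<le> m"
begin

definition ch where "ch c = {x. x < k \<and> K c x}"
definition X where "X = markov_tree_shift k K (\<lambda>_. A0)"
definition E where "E = {x. \<exists>p. p 0 = x \<and> (\<forall>n. A0 (p n) (p (Suc n)))}"
definition pth where "pth x = (SOME p. p 0 = x \<and> (\<forall>n. A0 (p n) (p (Suc n))))"
definition mary where "mary d = {z. set z \<subseteq> {..<m} \<and> length z \<le> d}"
definition V where "V d y = {u \<in> mary d \<rightarrow>\<^sub>E UNIV. u [] = y \<and> (\<forall>z\<in>mary d. u z \<in> E) \<and>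
     (\<forall>z r. z @ [r] \<in> mary d \<longrightarrow> A0 (u z) (u (z @ [r])))}"
definition ext where "ext d u z = (if length z \<le> d then u z else pth (u (take d z)) (length z - d))"

lemma card_ch: "c < k \<Longrightarrow> card (ch c) = m"
  using rows by (simp add: ch_def)

lemma finite_ch: "finite (ch c)" by (simp add: ch_def)

lemma pth_both: assumes "x \<in> E" shows "pth x 0 = x \<and> (\<forall>n. A0 (pth x n) (pth x (Suc n)))"
proof -
  have "\<exists>p. p 0 = x \<and> (\<forall>n. A0 (p n) (p (Suc n)))" using assms by (simp add: E_def)
  then show ?thesis unfolding pth_def by (rule someI_ex)
qed

lemma pth0: "x \<in> E \<Longrightarrow> pth x 0 = x" using pth_both by blast
lemma pth_step: "x \<in> E \<Longrightarrow> A0 (pth x n) (pth x (Suc n))" using pth_both by blast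

lemma pth_in_E: assumes "x \<in> E" shows "pth x n \<in> E"
  unfolding E_def mem_Collect_eq
  by (rule exI[where x="\<lambda>j. pth x (j + n)"]) (simp add: pth_step[OF assms])

lemma E_succ: "x \<in> E \<Longrightarrow> \<exists>y\<in>E. A0 x y"
  using pth_step[of x 0] pth0[of x] pth_in_E[of x 1] by auto

lemma finite_mary: "finite (mary d)"
proof -
  have "mary d = {z. set z \<subseteq> {..<m} \<and> length z \<le> d}" by (simp add: mary_def)
  then show ?thesis using finite_lists_length_le[of "{..<m}" d] by simp
qed

lemma finite_V: "finite (V d y)"
proof -
  have "V d y \<subseteq> mary d \<rightarrow>\<^sub>E (UNIV::'a set)" by (auto simp: V_def)
  moreover have "finite (mary d \<rightarrow>\<^sub>E (UNIV::'a set))" by (rule finite_PiE) (auto simp: finite_mary)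
  ultimately show ?thesis by (rule finite_subset)
qed

lemma Nil_mary[simp]: "[] \<in> mary d" by (simp add: mary_def)

lemma mary_snoc: "z @ [r] \<in> mary d \<Longrightarrow> z \<in> mary d"
  by (auto simp: mary_def)

lemma V_nonempty: assumes "y \<in> E" shows "restrict (\<lambda>z. pth y (length z)) (mary d) \<in> V d y"
  unfolding V_def
proof (intro CollectI conjI ballI allI impI)
  show "restrict (\<lambda>z. pth y (length z)) (mary d) \<in> mary d \<rightarrow>\<^sub>E UNIV" by simp
  show "restrict (\<lambda>z. pth y (length z)) (mary d) [] = y" using pth0[OF assms] by simp
  fix z assume "z \<in> mary d"
  then show "restrict (\<lambda>z. pth y (length z)) (mary d) z \<in> E" using pth_in_E[OF assms] by simp
next
  fix z r assume zr: "z @ [r] \<in> mary d"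
  then have "z \<in> mary d" by (rule mary_snoc)
  then show "A0 (restrict (\<lambda>z. pth y (length z)) (mary d) z) (restrict (\<lambda>z. pth y (length z)) (mary d) (z @ [r]))"
    using zr pth_step[OF assms, of "length z"] by simp
qed

lemma card_V_pos: "y \<in> E \<Longrightarrow> 1 \<le> card (V d y)"
  using V_nonempty[of y d] finite_V[of d y]
  by (metis One_nat_def Suc_leI card_gt_0_iff empty_iff)

lemma V0: assumes "y \<in> E" shows "card (V 0 y) = 1"
proof -
  have "mary 0 = {[]}" by (auto simp: mary_def)
  have "V 0 y \<subseteq> {restrict (\<lambda>z. y) {[]}}"
  proof
    fix u assume u: "u \<in> V 0 y"
    have "u = restrict (\<lambda>z. y) {[]}"
    proof (rule extensionalityI[of _ "{[]}"])
      show "u \<in> extensional {[]}" using u \<open>mary 0 = {[]}\<close> by (simp add: V_def PiE_def)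
      show "restrict (\<lambda>z. y) {[]} \<in> extensional {[]}" by simp
      fix z :: "nat list" assume "z \<in> {[]}" then show "u z = restrict (\<lambda>z. y) {[]} z" using u by (simp add: V_def)
    qed
    then show "u \<in> {restrict (\<lambda>z. y) {[]}}" by simp
  qed
  then have "card (V 0 y) \<le> 1" by (metis card.empty card.insert card_mono empty_iff finite.emptyI finite.insertI One_nat_def)
  then show ?thesis using card_V_pos[OF assms, of 0] by simp
qed

lemma mary_Cons: "(r # z \<in> mary (Suc d)) = (r < m \<and> z \<in> mary d)"
  by (auto simp: mary_def)

lemma V_glue:
  assumes xE: "x \<in> E" and yE: "y \<in> E" and xy: "A0 x y"
  shows "card (V d y) ^ m \<le> card (V (Suc d) x)"
proof -
  define G where "G fam = restrict (\<lambda>z. if z = [] then x else fam (hd z) (tl z)) (mary (Suc d))" for fam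
  have card_Pi: "card (PiE {..<m} (\<lambda>_. V d y)) = card (V d y) ^ m"
    by (simp add: card_PiE)
  have maps: "G fam \<in> V (Suc d) x" if f: "fam \<in> PiE {..<m} (\<lambda>_. V d y)" for fam
  proof -
    have fV: "r < m \<Longrightarrow> fam r \<in> V d y" for r using f by auto
    show ?thesis unfolding V_def
    proof (intro CollectI conjI ballI allI impI)
      show "G fam \<in> mary (Suc d) \<rightarrow>\<^sub>E UNIV" by (simp add: G_def)
      show "G fam [] = x" by (simp add: G_def)
    next
      fix z assume z: "z \<in> mary (Suc d)"
      show "G fam z \<in> E"
      proof (cases z)
        case Nil then show ?thesis using xE by (simp add: G_def)
      next
        case (Cons r z')
        then have "r < m" "z' \<in> mary d" using z mary_Cons by auto
        then show ?thesis using fV[of r] Cons z by (auto simp: G_def V_def)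
      qed
    next
      fix z r assume zr: "z @ [r] \<in> mary (Suc d)"
      then have zm: "z \<in> mary (Suc d)" by (auto simp: mary_def)
      show "A0 (G fam z) (G fam (z @ [r]))"
      proof (cases z)
        case Nil
        then have "r < m" using zr by (auto simp: mary_def)
        then have "fam r [] = y" using fV[of r] by (auto simp: V_def)
        then show ?thesis using Nil zr xy by (simp add: G_def)
      next
        case (Cons c z')
        then have c: "c < m" "z' @ [r] \<in> mary d" using zr by (auto simp: mary_def)
        then have "z' \<in> mary d" by (auto simp: mary_def)
        then show ?thesis using fV[OF c(1)] c Cons zr zm by (auto simp: G_def V_def)
      qed
    qed
  qed
  have inj: "inj_on G (PiE {..<m} (\<lambda>_. V d y))"
  proof (rule inj_onI)
    fix f g assume f: "f \<in> PiE {..<m} (\<lambda>_. V d y)" and g: "g \<in> PiE {..<m} (\<lambda>_. V d y)"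
      and eq: "G f = G g"
    show "f = g"
    proof (rule PiE_ext[OF f g])
      fix r assume r: "r \<in> {..<m}"
      have fr: "f r \<in> V d y" "g r \<in> V d y" using f g r by auto
      show "f r = g r"
      proof (rule extensionalityI[of _ "mary d"])
        show "f r \<in> extensional (mary d)" "g r \<in> extensional (mary d)"
          using fr by (auto simp: V_def PiE_def)
        fix z assume z: "z \<in> mary d"
        have "r # z \<in> mary (Suc d)" using z r by (auto simp: mary_def)
        then have "G f (r # z) = G g (r # z)" using eq by simp
        then show "f r z = g r z" using \<open>r # z \<in> mary (Suc d)\<close> by (simp add: G_def)
      qed
    qed
  qed
  have "card (PiE {..<m} (\<lambda>_. V d y)) \<le> card (V (Suc d) x)"
    using card_inj_on_le[OF inj] maps finite_V by blast
  then show ?thesis using card_Pi by simp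
qed

lemma V_split:
  assumes xE: "x \<in> E"
  shows "card (V (Suc d) x) \<le> (\<Sum>y\<in>{y\<in>E. A0 x y}. card (V d y)) ^ m"
proof -
  let ?U = "\<Union>y\<in>{y\<in>E. A0 x y}. V d y"
  define S where "S u = (\<lambda>r\<in>{..<m}. restrict (\<lambda>z. u (r # z)) (mary d))" for u :: "nat list \<Rightarrow> 'a"
  have maps: "S u \<in> PiE {..<m} (\<lambda>_. ?U)" if u: "u \<in> V (Suc d) x" for u
  proof -
    have uu: "u [] = x" "\<And>z. z \<in> mary (Suc d) \<Longrightarrow> u z \<in> E"
      "\<And>z r. z @ [r] \<in> mary (Suc d) \<Longrightarrow> A0 (u z) (u (z @ [r]))"
      using u by (auto simp: V_def)
    have "restrict (\<lambda>z. u (r # z)) (mary d) \<in> V d (u [r])" if r: "r < m" for r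
      unfolding V_def
    proof (intro CollectI conjI ballI allI impI)
      show "restrict (\<lambda>z. u (r # z)) (mary d) \<in> mary d \<rightarrow>\<^sub>E UNIV" by simp
      show "restrict (\<lambda>z. u (r # z)) (mary d) [] = u [r]" by simp
    next
      fix z assume "z \<in> mary d"
      then show "restrict (\<lambda>z. u (r # z)) (mary d) z \<in> E" using uu(2)[of "r # z"] r mary_Cons by auto
    next
      fix z r' assume zr: "z @ [r'] \<in> mary d"
      then have "z \<in> mary d" by (auto simp: mary_def)
      moreover have "(r # z) @ [r'] \<in> mary (Suc d)" using zr r by (auto simp: mary_def)
      ultimately show "A0 (restrict (\<lambda>z. u (r # z)) (mary d) z) (restrict (\<lambda>z. u (r # z)) (mary d) (z @ [r']))"
        using uu(3)[of "r # z" r'] zr by simp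
    qed
    moreover have "u [r] \<in> E \<and> A0 x (u [r])" if r: "r < m" for r
      using uu(1) uu(2)[of "[r]"] uu(3)[of "[]" r] r by (auto simp: mary_def)
    ultimately show ?thesis by (auto simp: S_def)
  qed
  have inj: "inj_on S (V (Suc d) x)"
  proof (rule inj_onI)
    fix u v assume u: "u \<in> V (Suc d) x" and v: "v \<in> V (Suc d) x" and eq: "S u = S v"
    show "u = v"
    proof (rule extensionalityI[of _ "mary (Suc d)"])
      show "u \<in> extensional (mary (Suc d))" "v \<in> extensional (mary (Suc d))"
        using u v by (auto simp: V_def PiE_def)
      fix z assume z: "z \<in> mary (Suc d)"
      show "u z = v z"
      proof (cases z)
        case Nil then show ?thesis using u v by (simp add: V_def)
      next
        case (Cons r z')
        then have "r < m" "z' \<in> mary d" using z mary_Cons by auto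
        then have "S u r z' = S v r z'" using eq by simp
        then show ?thesis using Cons \<open>r < m\<close> \<open>z' \<in> mary d\<close> by (simp add: S_def)
      qed
    qed
  qed
  have fin: "finite (PiE {..<m} (\<lambda>_. ?U))"
    by (rule finite_PiE) (auto intro: finite_V)
  have "card (V (Suc d) x) \<le> card (PiE {..<m} (\<lambda>_. ?U))"
    using card_inj_on_le[OF inj _ fin] maps by blast
  also have "\<dots> = card ?U ^ m" by (simp add: card_PiE)
  also have "\<dots> \<le> (\<Sum>y\<in>{y\<in>E. A0 x y}. card (V d y)) ^ m"
    by (rule power_mono) (auto intro: card_UN_le)
  finally show ?thesis .
qed

lemma ext_edge:
  assumes u: "u \<in> V d y" and z: "set z \<subseteq> {..<m}" and r: "r < m"
  shows "A0 (ext d u z) (ext d u (z @ [r]))"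
proof -
  have uu: "\<And>z. z \<in> mary d \<Longrightarrow> u z \<in> E"
      "\<And>z r. z @ [r] \<in> mary d \<Longrightarrow> A0 (u z) (u (z @ [r]))"
    using u by (auto simp: V_def)
  consider "length z < d" | "length z = d" | "length z > d" by linarith
  then show ?thesis
  proof cases
    case 1
    then have "z @ [r] \<in> mary d" using z r by (auto simp: mary_def)
    then show ?thesis using uu(2) 1 by (simp add: ext_def)
  next
    case 2
    then have "u z \<in> E" using uu(1) z by (auto simp: mary_def)
    then show ?thesis using 2 pth_step[of "u z" 0] pth0[of "u z"] by (simp add: ext_def)
  next
    case 3
    have "take d (z @ [r]) = take d z" using 3 by simp
    moreover have "length z + 1 - d = Suc (length z - d)" using 3 by simp
    moreover have "take d z \<in> mary d" using z by (auto simp: mary_def dest: in_set_takeD)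
    then have "u (take d z) \<in> E" using uu(1) by blast
    ultimately show ?thesis using 3 pth_step[of "u (take d z)" "length z - d"] by (simp add: ext_def)
  qed
qed

lemma ext_Nil: "ext d u [] = u []" by (simp add: ext_def)

end

lemma arith1: "1 \<le> (m::nat) \<Longrightarrow> (m + m*b)*(m-1) + m = m*(b*(m-1)+m)"
  by (cases m) (auto simp: algebra_simps)

context TS begin

primrec Ej :: "nat \<Rightarrow> 'a set" where
  "Ej 0 = E"
| "Ej (Suc j) = {y \<in> E. \<exists>x\<in>Ej j. A0 x y}"

definition Mx where "Mx j d = Max ((\<lambda>y. card (V d y)) ` Ej j)"

primrec Sr :: "nat \<Rightarrow> nat" where
  "Sr 0 = 0"
| "Sr (Suc r) = m + m * Sr r"

lemma Ej_E: "Ej j \<subseteq> E"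
  by (cases j) auto

lemma Ej_Suc_sub: "Ej (Suc j) \<subseteq> Ej j"
proof (induction j)
  case 0 then show ?case by auto
next
  case (Suc j) then show ?case by auto
qed

lemma Ej_mono: "i \<le> j \<Longrightarrow> Ej j \<subseteq> Ej i"
proof (induction j)
  case 0 then show ?case by simp
next
  case (Suc j) then show ?case using Ej_Suc_sub by (metis le_Suc_eq order_trans order_refl)
qed

lemma Sr_mono: "i \<le> j \<Longrightarrow> Sr i \<le> Sr j"
proof (induction j)
  case 0 then show ?case by simp
next
  case (Suc j)
  show ?case
  proof (cases "i = Suc j")
    case True then show ?thesis by simp
  next
    case False
    then have "Sr i \<le> Sr j" using Suc by simp
    also have "Sr j \<le> m * Sr j" using m_pos by simp
    finally show ?thesis by simp
  qed
qed

lemma Sr_eq: "Sr e * (m - 1) + m = m ^ Suc e"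
proof -
  obtain m' where m': "m = Suc m'" using m_pos by (cases m) auto
  show ?thesis
  proof (induction e)
    case 0 then show ?case by simp
  next
    case (Suc e)
    have "Sr (Suc e) * (m - 1) + m = m * (Sr e * (m - 1) + m)"
      using arith1[OF m_pos, of "Sr e"] by simp
    then show ?case using Suc by simp
  qed
qed

lemma Sr_bound: "2 \<le> m \<Longrightarrow> Sr e \<le> m ^ (Suc e)"
proof -
  assume m2: "2 \<le> m"
  have "1 \<le> m - 1" using m2 by simp
  then have "Sr e \<le> Sr e * (m - 1)" by (metis mult.right_neutral mult_le_mono2)
  also have "\<dots> \<le> m ^ Suc e" using Sr_eq[of e] by linarith
  finally show ?thesis .
qed

context
  assumes E_ne: "E \<noteq> {}"
begin

lemma Ej_ne: "Ej j \<noteq> {}"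
proof -
  obtain x where x: "x \<in> E" using E_ne by auto
  have "pth x j \<in> Ej j"
  proof (induction j)
    case 0 then show ?case using pth_in_E[OF x] by simp
  next
    case (Suc j) then show ?case using pth_in_E[OF x] pth_step[OF x, of j] by auto
  qed
  then show ?thesis by auto
qed

lemma finite_Ej: "finite (Ej j)" by simp

lemma Mx_ge: "y \<in> Ej j \<Longrightarrow> card (V d y) \<le> Mx j d"
  unfolding Mx_def by (rule Max_ge) auto

lemma Mx_attained: "\<exists>y\<in>Ej j. Mx j d = card (V d y)"
  unfolding Mx_def using Ej_ne[of j] by (metis (no_types, lifting) Max_in finite_Ej finite_imageI image_iff image_is_empty)

lemma Mx_pos: "1 \<le> Mx j d"
  using Mx_attained[of j d] card_V_pos Ej_E by fastforce

lemma Mx_0: "Mx j 0 = 1"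
  using Mx_attained[of j 0] V0 Ej_E by fastforce

lemma Mx_step: "Mx j (Suc e) \<le> (CARD('a) * Mx (Suc j) e) ^ m"
proof -
  obtain x where x: "x \<in> Ej j" "Mx j (Suc e) = card (V (Suc e) x)" using Mx_attained by blast
  have xE: "x \<in> E" using x Ej_E by blast
  have "card (V (Suc e) x) \<le> (\<Sum>y\<in>{y\<in>E. A0 x y}. card (V e y)) ^ m" by (rule V_split[OF xE])
  also have "\<dots> \<le> (\<Sum>y\<in>{y\<in>E. A0 x y}. Mx (Suc j) e) ^ m"
  proof (rule power_mono[OF sum_mono])
    fix y assume "y \<in> {y\<in>E. A0 x y}"
    then have "y \<in> Ej (Suc j)" using x by auto
    then show "card (V e y) \<le> Mx (Suc j) e" by (rule Mx_ge)
  qed simp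
  also have "\<dots> \<le> (CARD('a) * Mx (Suc j) e) ^ m"
    by (rule power_mono) (auto intro: mult_right_mono card_mono)
  finally show ?thesis using x by simp
qed

lemma Mx_iter: "Mx j (d + r) \<le> CARD('a) ^ (Sr r) * Mx (j + r) d ^ (m ^ r)"
proof (induction r arbitrary: j)
  case 0 then show ?case by simp
next
  case (Suc r)
  have "Mx j (d + Suc r) = Mx j (Suc (d + r))" by simp
  also have "\<dots> \<le> (CARD('a) * Mx (Suc j) (d + r)) ^ m" by (rule Mx_step)
  also have "\<dots> \<le> (CARD('a) * (CARD('a) ^ (Sr r) * Mx (Suc j + r) d ^ (m ^ r))) ^ m"
    by (intro power_mono mult_left_mono Suc.IH) auto
  also have "\<dots> = CARD('a) ^ (Sr (Suc r)) * Mx (j + Suc r) d ^ (m ^ Suc r)"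
    by (simp add: power_mult_distrib power_add power_mult[symmetric] mult.commute)
  finally show ?case .
qed

lemma stabilize: "\<exists>r. Ej (Suc r) = Ej r"
proof (rule ccontr)
  assume "\<nexists>r. Ej (Suc r) = Ej r"
  then have ps: "Ej (Suc r) \<subset> Ej r" for r using Ej_Suc_sub by blast
  have "card (Ej r) + r \<le> card (Ej 0)" for r
  proof (induction r)
    case 0 then show ?case by simp
  next
    case (Suc r)
    have "card (Ej (Suc r)) < card (Ej r)" using ps[of r] by (simp add: psubset_card_mono)
    then show ?case using Suc by simp
  qed
  from this[of "Suc (card (Ej 0))"] show False by simp
qed

definition r0 where "r0 = (SOME r. Ej (Suc r) = Ej r)"

lemma r0: "Ej (Suc r0) = Ej r0"
  unfolding r0_def using stabilize by (rule someI_ex)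

definition MM where "MM e = Mx r0 e"

lemma MM_super: "MM e ^ m \<le> MM (Suc e)"
proof -
  obtain y where y: "y \<in> Ej r0" "MM e = card (V e y)" using Mx_attained unfolding MM_def by blast
  then have "y \<in> Ej (Suc r0)" using r0 by simp
  then obtain x where x: "x \<in> Ej r0" "A0 x y" "y \<in> E" by auto
  have "card (V e y) ^ m \<le> card (V (Suc e) x)" using V_glue x Ej_E by blast
  also have "\<dots> \<le> MM (Suc e)" unfolding MM_def by (rule Mx_ge[OF x(1)])
  finally show ?thesis using y by simp
qed

lemma MM_pos: "1 \<le> MM e" unfolding MM_def by (rule Mx_pos)

lemma MM_le_Mx0: "MM e \<le> Mx 0 e"
proof -
  obtain y where y: "y \<in> Ej r0" "MM e = card (V e y)" using Mx_attained unfolding MM_def by blast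
  then have "y \<in> Ej 0" using Ej_E by auto
  then show ?thesis using y Mx_ge by simp
qed

end
end

context TS begin
context
  assumes E_ne: "E \<noteq> {}" and m2: "2 \<le> m"
begin

definition aa where "aa e = ln (real (MM e)) / real m ^ e"
definition mu where "mu = (SUP e. aa e)"

lemma MM_real_pos: "1 \<le> real (MM e)" using MM_pos[OF E_ne] by simp

lemma aa_nonneg: "0 \<le> aa e"
  unfolding aa_def using MM_real_pos by simp

lemma aa_inc: "incseq aa"
proof (rule incseq_SucI)
  fix e
  have "real (MM e) ^ m \<le> real (MM (Suc e))" using MM_super[OF E_ne, of e] by (metis of_nat_le_iff of_nat_power)
  moreover have "0 < real (MM e) ^ m" using MM_real_pos[of e] by simp
  ultimately have "ln (real (MM e) ^ m) \<le> ln (real (MM (Suc e)))"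
    by (rule ln_mono)
  then have "real m * ln (real (MM e)) \<le> ln (real (MM (Suc e)))"
    using MM_real_pos by (simp add: ln_realpow)
  then have "real m * ln (real (MM e)) / real m ^ Suc e \<le> ln (real (MM (Suc e))) / real m ^ Suc e"
    using m2 by (intro divide_right_mono) auto
  then show "aa e \<le> aa (Suc e)" unfolding aa_def using m2 by simp
qed

lemma aa_bdd: "aa e \<le> real m * ln (real CARD('a))"
proof -
  have "MM e \<le> Mx 0 e" by (rule MM_le_Mx0[OF E_ne])
  also have "Mx 0 e = Mx 0 (0 + e)" by simp
  also have "\<dots> \<le> CARD('a) ^ (Sr e) * Mx (0 + e) 0 ^ (m ^ e)" by (rule Mx_iter[OF E_ne])
  also have "\<dots> = CARD('a) ^ (Sr e)" using Mx_0[OF E_ne] by simp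
  finally have "real (MM e) \<le> real CARD('a) ^ Sr e" by (metis of_nat_le_iff of_nat_power)
  then have "ln (real (MM e)) \<le> ln (real CARD('a) ^ Sr e)"
    using MM_real_pos[of e] by (intro ln_mono) auto
  also have "\<dots> = real (Sr e) * ln (real CARD('a))" by (simp add: ln_realpow)
  also have "\<dots> \<le> real m ^ Suc e * ln (real CARD('a))"
  proof (rule mult_right_mono)
    have "real (Sr e) \<le> real (m ^ Suc e)" using Sr_bound[OF m2, of e] by (simp only: of_nat_le_iff)
    then show "real (Sr e) \<le> real m ^ Suc e" by simp
  qed simp
  finally have "ln (real (MM e)) / real m ^ e \<le> real m ^ Suc e * ln (real CARD('a)) / real m ^ e"
    using m2 by (intro divide_right_mono) auto
  then show ?thesis unfolding aa_def using m2 by simp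
qed

lemma aa_bdd_above: "bdd_above (range aa)"
  using aa_bdd by (intro bdd_aboveI2) blast

lemma aa_lim: "aa \<longlonglongrightarrow> mu"
  unfolding mu_def by (rule LIMSEQ_incseq_SUP[OF aa_bdd_above aa_inc])

lemma aa_le_mu: "aa e \<le> mu"
  unfolding mu_def by (rule cSUP_upper[OF _ aa_bdd_above]) simp

lemma mu_nonneg: "0 \<le> mu"
  using aa_nonneg[of 0] aa_le_mu[of 0] by simp

lemma MM_le_exp: "real (MM e) \<le> exp (mu * real m ^ e)"
proof -
  have "ln (real (MM e)) \<le> mu * real m ^ e"
    using aa_le_mu[of e] m2 unfolding aa_def by (simp add: divide_le_eq)
  then show ?thesis using MM_real_pos by (metis exp_le_cancel_iff exp_ln less_le_trans zero_less_one)
qed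

definition C0 where "C0 = real (1 + Sr r0) * ln (real CARD('a))"

lemma C0_nonneg: "0 \<le> C0"
  unfolding C0_def by simp

lemma card_ge1: "1 \<le> real CARD('a)" by simp

lemma expC0: "exp C0 = real CARD('a) ^ (1 + Sr r0)"
  unfolding C0_def by (subst exp_of_nat_mult) simp

lemma Hon_abs: "real (CARD('a) * Mx 0 d) \<le> exp (mu * real m ^ d + C0)"
proof (cases "r0 \<le> d")
  case True
  have "Mx 0 d = Mx 0 ((d - r0) + r0)" using True by simp
  also have "\<dots> \<le> CARD('a) ^ (Sr r0) * Mx (0 + r0) (d - r0) ^ (m ^ r0)" by (rule Mx_iter[OF E_ne])
  finally have "real (Mx 0 d) \<le> real (CARD('a) ^ (Sr r0) * Mx (0 + r0) (d - r0) ^ (m ^ r0))"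
    by (simp only: of_nat_le_iff)
  also have "\<dots> = real CARD('a) ^ (Sr r0) * real (MM (d - r0)) ^ (m ^ r0)"
    by (simp add: MM_def[OF E_ne])
  also have "\<dots> \<le> real CARD('a) ^ (Sr r0) * exp (mu * real m ^ (d - r0)) ^ (m ^ r0)"
    using MM_le_exp MM_real_pos by (intro mult_left_mono power_mono) auto
  also have "exp (mu * real m ^ (d - r0)) ^ (m ^ r0) = exp (mu * real m ^ d)"
  proof -
    have e1: "exp (mu * real m ^ (d - r0)) ^ (m ^ r0) = exp (real (m ^ r0) * (mu * real m ^ (d - r0)))"
      by (rule exp_of_nat_mult[symmetric])
    have "real m ^ r0 * real m ^ (d - r0) = real m ^ d"
      using True by (metis le_add_diff_inverse power_add)
    then have "real (m ^ r0) * (mu * real m ^ (d - r0)) = mu * real m ^ d"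
      by (simp add: algebra_simps)
    then show ?thesis using e1 by simp
  qed
  finally have a: "real (Mx 0 d) \<le> real CARD('a) ^ Sr r0 * exp (mu * real m ^ d)" .
  have "real (CARD('a) * Mx 0 d) \<le> real CARD('a) * (real CARD('a) ^ Sr r0 * exp (mu * real m ^ d))"
    using a by simp
  also have "\<dots> = exp C0 * exp (mu * real m ^ d)"
    unfolding expC0 by simp
  finally show ?thesis by (simp add: exp_add mult.commute)
next
  case False
  have "Mx 0 d = Mx 0 (0 + d)" by simp
  also have "\<dots> \<le> CARD('a) ^ (Sr d) * Mx (0 + d) 0 ^ (m ^ d)" by (rule Mx_iter[OF E_ne])
  also have "\<dots> = CARD('a) ^ (Sr d)" using Mx_0[OF E_ne] by simp
  also have "\<dots> \<le> CARD('a) ^ (Sr r0)" using False Sr_mono by (intro power_increasing) auto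
  finally have "CARD('a) * Mx 0 d \<le> CARD('a) ^ (1 + Sr r0)" by simp
  then have "real (CARD('a) * Mx 0 d) \<le> real (CARD('a) ^ (1 + Sr r0))" by (simp only: of_nat_le_iff)
  also have "\<dots> = exp C0" unfolding expC0 by simp
  also have "\<dots> \<le> exp (mu * real m ^ d + C0)" using mu_nonneg by simp
  finally show ?thesis .
qed

end
end

context TS begin

definition sel where "sel c = (SOME h. bij_betw h {..<m} (ch c))"
definition rank where "rank c = inv_into {..<m} (sel c)"

fun psi :: "nat \<Rightarrow> nat list \<Rightarrow> nat list" where
  "psi c [] = []"
| "psi c (r # z) = sel c r # psi (sel c r) z"

fun phi :: "nat \<Rightarrow> nat list \<Rightarrow> nat list" where
  "phi c [] = []"
| "phi c (x # y) = rank c x # phi x y"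

fun ok :: "nat \<Rightarrow> nat list \<Rightarrow> bool" where
  "ok c [] = True"
| "ok c (x # y) = (x \<in> ch c \<and> ok x y)"

definition SubJ where "SubJ J d = {y \<in> sgG k K. length y \<le> d \<and> (y = [] \<or> hd y \<in> J)}"

lemma sel_bij: "c < k \<Longrightarrow> bij_betw (sel c) {..<m} (ch c)"
proof -
  assume c: "c < k"
  obtain h where "bij_betw h {0..<card (ch c)} (ch c)" using ex_bij_betw_nat_finite[OF finite_ch[of c]] by blast
  then have "\<exists>h. bij_betw h {..<m} (ch c)" using card_ch[OF c] by (auto simp: atLeast0LessThan)
  then show ?thesis unfolding sel_def by (rule someI_ex)
qed

lemma sel_in: "c < k \<Longrightarrow> r < m \<Longrightarrow> sel c r \<in> ch c"
  using sel_bij bij_betwE by blast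

lemma ch_lt: "x \<in> ch c \<Longrightarrow> x < k" by (simp add: ch_def)

lemma rank_lt: "c < k \<Longrightarrow> x \<in> ch c \<Longrightarrow> rank c x < m"
  unfolding rank_def using sel_bij bij_betw_inv_into bij_betwE by blast

lemma sel_rank: "c < k \<Longrightarrow> x \<in> ch c \<Longrightarrow> sel c (rank c x) = x"
  unfolding rank_def using sel_bij bij_betw_inv_into_right by fastforce

lemma rank_sel: "c < k \<Longrightarrow> r < m \<Longrightarrow> rank c (sel c r) = r"
  unfolding rank_def using sel_bij bij_betw_inv_into_left by fastforce

lemma ok_iff: "c < k \<Longrightarrow> ok c y \<longleftrightarrow> (y \<in> sgG k K \<and> (y = [] \<or> hd y \<in> ch c))"
proof (induction y arbitrary: c)
  case Nil then show ?case by simp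
next
  case (Cons x y)
  show ?case
  proof
    assume a: "ok c (x # y)"
    then have x: "x \<in> ch c" "ok x y" by auto
    then have "x < k" by (simp add: ch_def)
    then have "y \<in> sgG k K \<and> (y = [] \<or> hd y \<in> ch x)" using Cons.IH x by blast
    then show "x # y \<in> sgG k K \<and> (x # y = [] \<or> hd (x # y) \<in> ch c)"
      using x \<open>x < k\<close> by (auto simp: sgG_Cons ch_def)
  next
    assume a: "x # y \<in> sgG k K \<and> (x # y = [] \<or> hd (x # y) \<in> ch c)"
    then have "x < k" "y \<in> sgG k K" "y = [] \<or> K x (hd y)" "x \<in> ch c" by (auto simp: sgG_Cons)
    moreover have "y = [] \<or> hd y < k" using \<open>y \<in> sgG k K\<close> by (cases y) (auto simp: sgG_Cons)
    ultimately show "ok c (x # y)" using Cons.IH[of x] by (auto simp: ch_def)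
  qed
qed

lemma ok_snoc: "ok c (y @ [x]) \<longleftrightarrow> ok c y \<and> x \<in> ch (last (c # y))"
  by (induction y arbitrary: c) auto

lemma psi_len: "length (psi c z) = length z"
  by (induction z arbitrary: c) auto

lemma psi_ok: "c < k \<Longrightarrow> set z \<subseteq> {..<m} \<Longrightarrow> ok c (psi c z)"
proof (induction z arbitrary: c)
  case Nil then show ?case by simp
next
  case (Cons r z)
  have "sel c r \<in> ch c" using Cons.prems sel_in by auto
  then show ?case using Cons ch_lt by auto
qed

lemma psi_snoc: "psi c (z @ [r]) = psi c z @ [sel (last (c # psi c z)) r]"
  by (induction z arbitrary: c) auto

lemma phi_snoc: "phi c (y @ [x]) = phi c y @ [rank (last (c # y)) x]"
  by (induction y arbitrary: c) auto

lemma phi_psi: "c < k \<Longrightarrow> set z \<subseteq> {..<m} \<Longrightarrow> phi c (psi c z) = z"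
proof (induction z arbitrary: c)
  case Nil then show ?case by simp
next
  case (Cons r z)
  have "sel c r \<in> ch c" using Cons.prems sel_in by auto
  then show ?case using Cons ch_lt rank_sel by auto
qed

lemma psi_phi: "c < k \<Longrightarrow> ok c y \<Longrightarrow> psi c (phi c y) = y \<and> set (phi c y) \<subseteq> {..<m} \<and> length (phi c y) = length y"
proof (induction y arbitrary: c)
  case Nil then show ?case by simp
next
  case (Cons x y)
  then have x: "x \<in> ch c" "ok x y" by auto
  have "x < k" using x(1) ch_lt by blast
  then show ?case using Cons.IH[of x] x sel_rank[OF Cons.prems(1) x(1)] rank_lt[OF Cons.prems(1) x(1)] by auto
qed

lemma X_iff: "t \<in> X \<longleftrightarrow> (\<forall>g \<in> sgG k K. \<forall>i<k. (g = [] \<or> K (last g) i) \<longrightarrow> A0 (t g) (t (g @ [i])))"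
  unfolding X_def mts_iff by simp

definition nxt where "nxt v = v @ [SOME x. x < k \<and> (v = [] \<or> K (last v) x)]"

lemma nxt_ex: "v \<in> sgG k K \<Longrightarrow> \<exists>x. x < k \<and> (v = [] \<or> K (last v) x)"
proof (cases "v = []")
  case True then show ?thesis using k_pos by (intro exI[of _ 0]) auto
next
  case False
  assume v: "v \<in> sgG k K"
  then have "last v < k" using False sgG_last by blast
  then have "card (ch (last v)) = m" by (rule card_ch)
  then have "ch (last v) \<noteq> {}" using m_pos by auto
  then show ?thesis by (auto simp: ch_def)
qed

lemma nxt_prop: "v \<in> sgG k K \<Longrightarrow> \<exists>x. nxt v = v @ [x] \<and> x < k \<and> (v = [] \<or> K (last v) x)"
  unfolding nxt_def using someI_ex[OF nxt_ex] by blast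

lemma nxt_in: "v \<in> sgG k K \<Longrightarrow> nxt v \<in> sgG k K"
  using nxt_prop sgG_snoc by metis

lemma nxt_pow_in: "v \<in> sgG k K \<Longrightarrow> (nxt ^^ n) v \<in> sgG k K"
  by (induction n) (auto intro: nxt_in)

lemma X_label_E: assumes t: "t \<in> X" and v: "v \<in> sgG k K" shows "t v \<in> E"
proof -
  have "A0 (t ((nxt ^^ n) v)) (t ((nxt ^^ Suc n) v))" for n
  proof -
    have g: "(nxt ^^ n) v \<in> sgG k K" using nxt_pow_in[OF v] .
    obtain x where x: "nxt ((nxt ^^ n) v) = (nxt ^^ n) v @ [x]" "x < k" "(nxt ^^ n) v = [] \<or> K (last ((nxt ^^ n) v)) x"
      using nxt_prop[OF g] by blast
    then show ?thesis using t g unfolding X_iff by auto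
  qed
  then show ?thesis unfolding E_def by (intro CollectI exI[of _ "\<lambda>n. t ((nxt ^^ n) v)"]) auto
qed

definition realt where
  "realt x0 d fam v = (if v = [] then x0 else ext d (fam (hd v)) (phi (hd v) (tl v)))"

lemma realt_in_X:
  assumes fam: "\<And>c. c < k \<Longrightarrow> \<exists>y. fam c \<in> V d y \<and> A0 x0 y"
  shows "realt x0 d fam \<in> X"
  unfolding X_iff
proof (intro ballI allI impI)
  fix g i assume g: "g \<in> sgG k K" and i: "i < k" and gi: "g = [] \<or> K (last g) i"
  show "A0 (realt x0 d fam g) (realt x0 d fam (g @ [i]))"
  proof (cases g)
    case Nil
    obtain y where y: "fam i \<in> V d y" "A0 x0 y" using fam[OF i] by blast
    then have "fam i [] = y" by (simp add: V_def)
    then show ?thesis using Nil y by (simp add: realt_def ext_Nil)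
  next
    case (Cons c y)
    have c: "c < k" "y \<in> sgG k K" "y = [] \<or> K c (hd y)" using g Cons by (auto simp: sgG_Cons)
    have "y = [] \<or> hd y < k" using c(2) by (cases y) (auto simp: sgG_Cons)
    then have oky: "ok c y" using c ok_iff[OF c(1)] by (auto simp: ch_def)
    have pp: "set (phi c y) \<subseteq> {..<m}" using psi_phi[OF c(1) oky] by blast
    have lc: "last (c # y) = last g" using Cons by simp
    have lk: "last g < k" using g Cons sgG_last by blast
    have ich: "i \<in> ch (last (c # y))" using gi Cons i lc by (auto simp: ch_def)
    have rk: "rank (last (c # y)) i < m" using rank_lt[OF _ ich] lk lc by simp
    obtain y0 where y0: "fam c \<in> V d y0" using fam[OF c(1)] by blast
    have "A0 (ext d (fam c) (phi c y)) (ext d (fam c) (phi c y @ [rank (last (c # y)) i]))"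
      by (rule ext_edge[OF y0 pp rk])
    then show ?thesis using Cons by (simp add: realt_def phi_snoc)
  qed
qed

lemma realt_val: "c < k \<Longrightarrow> z \<in> mary d \<Longrightarrow> realt x0 d fam (c # psi c z) = fam c z"
  using phi_psi[of c z] by (auto simp: realt_def ext_def mary_def psi_len)

definition Hon where
  "Hon c d = {restrict (\<lambda>y. t (w @ y)) (SubJ (ch c) d) | t w. t \<in> X \<and> w \<in> sgG k K \<and> w \<noteq> [] \<and> last w = c}"

lemma SubJ_ok: "c < k \<Longrightarrow> y \<in> SubJ (ch c) d \<longleftrightarrow> ok c y \<and> length y \<le> d"
  unfolding SubJ_def using ok_iff by auto

lemma Hon_card:
  assumes E_ne: "E \<noteq> {}" and c: "c < k"
  shows "card (Hon c d) \<le> CARD('a) * Mx 0 d"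
proof -
  define Phi where "Phi u = restrict (\<lambda>z. u (psi c z)) (mary d)" for u :: "nat list \<Rightarrow> 'a"
  let ?U = "\<Union>y\<in>E. V d y"
  have maps: "Phi u \<in> ?U" if u: "u \<in> Hon c d" for u
  proof -
    obtain t w where tw: "u = restrict (\<lambda>y. t (w @ y)) (SubJ (ch c) d)" "t \<in> X" "w \<in> sgG k K" "w \<noteq> []" "last w = c"
      using u unfolding Hon_def by blast
    have inS: "psi c z \<in> SubJ (ch c) d" if "z \<in> mary d" for z
      using that psi_ok[OF c] SubJ_ok[OF c] psi_len by (auto simp: mary_def)
    have wsg: "w @ psi c z \<in> sgG k K" if "z \<in> mary d" for z
    proof -
      have "ok c (psi c z)" using that psi_ok[OF c] by (auto simp: mary_def)
      then have "psi c z \<in> sgG k K \<and> (psi c z = [] \<or> hd (psi c z) \<in> ch c)" using ok_iff[OF c] by blast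
      then show ?thesis using tw by (auto simp: sgG_append ch_def)
    qed
    have "Phi u \<in> V d (t w)"
      unfolding V_def
    proof (intro CollectI conjI ballI allI impI)
      show "Phi u \<in> mary d \<rightarrow>\<^sub>E UNIV" by (simp add: Phi_def)
      show "Phi u [] = t w" using inS[of "[]"] tw(1) by (simp add: Phi_def)
    next
      fix z assume z: "z \<in> mary d"
      show "Phi u z \<in> E" using z inS[OF z] tw X_label_E wsg[OF z] by (simp add: Phi_def)
    next
      fix z r assume zr: "z @ [r] \<in> mary d"
      then have z: "z \<in> mary d" and r: "r < m" by (auto simp: mary_def)
      let ?x = "sel (last (c # psi c z)) r"
      have lz: "last (c # psi c z) < k"
        using psi_ok[OF c, of z] z ok_iff[OF c] by (cases "psi c z = []") (auto simp: mary_def c intro: sgG_last)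
      have xch: "?x \<in> ch (last (c # psi c z))" using sel_in[OF lz r] .
      have lw: "last (w @ psi c z) = last (c # psi c z)" using tw by (cases "psi c z = []") auto
      have "A0 (t (w @ psi c z)) (t ((w @ psi c z) @ [?x]))"
        using tw(2) wsg[OF z] xch lw unfolding X_iff by (auto simp: ch_def)
      then show "A0 (Phi u z) (Phi u (z @ [r]))"
        using inS[OF z] inS[OF zr] z zr tw(1) by (simp add: Phi_def psi_snoc)
    qed
    moreover have "t w \<in> E" using X_label_E tw by blast
    ultimately show ?thesis by blast
  qed
  have inj: "inj_on Phi (Hon c d)"
  proof (rule inj_onI)
    fix u u' assume u: "u \<in> Hon c d" and u': "u' \<in> Hon c d" and eq: "Phi u = Phi u'"
    have ext: "u \<in> extensional (SubJ (ch c) d)" "u' \<in> extensional (SubJ (ch c) d)"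
      using u u' unfolding Hon_def by auto
    show "u = u'"
    proof (rule extensionalityI[OF ext])
      fix y assume y: "y \<in> SubJ (ch c) d"
      then have oky: "ok c y" "length y \<le> d" using SubJ_ok[OF c] by auto
      have pp: "psi c (phi c y) = y" "set (phi c y) \<subseteq> {..<m}" "length (phi c y) = length y"
        using psi_phi[OF c oky(1)] by auto
      then have "phi c y \<in> mary d" using oky by (simp add: mary_def)
      then have "Phi u (phi c y) = Phi u' (phi c y)" using eq by simp
      then show "u y = u' y" using \<open>phi c y \<in> mary d\<close> pp by (simp add: Phi_def)
    qed
  qed
  have finU: "finite ?U" by (auto intro: finite_V)
  have "card (Hon c d) \<le> card ?U"
    using card_inj_on_le[OF inj _ finU] maps by blast
  also have "\<dots> \<le> (\<Sum>y\<in>E. card (V d y))" by (rule card_UN_le) simp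
  also have "\<dots> \<le> (\<Sum>y\<in>E. Mx 0 d)" by (rule sum_mono) (simp add: Mx_ge[OF E_ne])
  also have "\<dots> \<le> CARD('a) * Mx 0 d" by (simp add: card_mono mult_right_mono)
  finally show ?thesis .
qed

end

context TS begin

lemma finite_SubJ: "finite (SubJ J d)"
proof -
  have "SubJ J d \<subseteq> {y. set y \<subseteq> {..<k} \<and> length y \<le> d}" by (auto simp: SubJ_def sgG_def)
  then show ?thesis using finite_lists_length_le[of "{..<k}" d] finite_subset by auto
qed

lemma finite_acc: "finite (accepted_patterns k K X H)" if "finite H"
proof -
  have "accepted_patterns k K X H \<subseteq> H \<rightarrow>\<^sub>E (UNIV :: 'a set)"
    by (auto simp: accepted_patterns_def)
  moreover have "finite (H \<rightarrow>\<^sub>E (UNIV :: 'a set))" using that by (intro finite_PiE) auto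
  ultimately show ?thesis by (rule finite_subset)
qed

lemma SubJ_0: "SubJ J 0 = {[]}" by (auto simp: SubJ_def)

lemma W0: "card (accepted_patterns k K X (SubJ J 0)) \<le> CARD('a)"
proof -
  have "accepted_patterns k K X (SubJ J 0) \<subseteq> (\<lambda>a. restrict (\<lambda>_. a) {[] :: nat list}) ` UNIV"
  proof
    fix u assume "u \<in> accepted_patterns k K X (SubJ J 0)"
    then obtain t g where "u = restrict (\<lambda>h. t (sgmult K g h)) {[]}" by (auto simp: accepted_patterns_def SubJ_0)
    then have "u = restrict (\<lambda>_. t g) {[]}" by (auto simp: fun_eq_iff)
    then show "u \<in> (\<lambda>a. restrict (\<lambda>_. a) {[]}) ` UNIV" by blast
  qed
  moreover have "finite ((\<lambda>a. restrict (\<lambda>_. a) {[] :: nat list}) ` (UNIV :: 'a set))" by simp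
  ultimately have "card (accepted_patterns k K X (SubJ J 0)) \<le> card ((\<lambda>a. restrict (\<lambda>_. a) {[] :: nat list}) ` (UNIV :: 'a set))"
    by (simp add: card_mono)
  also have "\<dots> \<le> CARD('a)" by (rule card_image_le) simp
  finally show ?thesis .
qed

lemma finite_Hon: "finite (Hon c d)"
proof -
  have "Hon c d \<subseteq> SubJ (ch c) d \<rightarrow>\<^sub>E (UNIV :: 'a set)" by (auto simp: Hon_def)
  moreover have "finite (SubJ (ch c) d \<rightarrow>\<^sub>E (UNIV :: 'a set))" by (intro finite_PiE finite_SubJ) auto
  ultimately show ?thesis by (rule finite_subset)
qed

definition chv where "chv v = (if v = [] then {..<k} else ch (last v))"
definition Jp where "Jp J S = {x. x < k \<and> (\<exists>j\<in>J - S. K j x)}"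
definition TT where "TT = insert {..<k} (ch ` {..<k})"
definition FF where "FF J d S = (\<lambda>(a, fam, u'). restrict (\<lambda>y. if y = [] then a else if hd y \<in> S then fam (hd y) (tl y) else u' (tl y)) (SubJ J (Suc d)))"
definition Dom where "Dom J d S = (UNIV :: 'a set) \<times> (PiE (J \<inter> S) (\<lambda>j. Hon j d)) \<times> accepted_patterns k K X (SubJ (Jp J S) d)"

lemma finite_Dom: "J \<subseteq> {..<k} \<Longrightarrow> finite (Dom J d S)"
proof -
  assume J: "J \<subseteq> {..<k}"
  have "finite (J \<inter> S)" using J by (meson finite_Int finite_lessThan finite_subset)
  then show ?thesis unfolding Dom_def
    by (intro finite_cartesian_product finite_PiE finite_acc finite_SubJ finite_Hon) auto
qed

lemma card_TT: "card TT \<le> k + 1"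
proof -
  have "card TT \<le> Suc (card (ch ` {..<k}))" unfolding TT_def by (rule card_insert_le_m1) auto
  also have "card (ch ` {..<k}) \<le> k" using card_image_le[of "{..<k}" ch] by simp
  finally show ?thesis by simp
qed

lemma finite_TT: "finite TT" by (simp add: TT_def)

lemma W_decomp: "accepted_patterns k K X (SubJ J (Suc d)) \<subseteq> (\<Union>S\<in>TT. FF J d S ` Dom J d S)"
proof
  fix u assume "u \<in> accepted_patterns k K X (SubJ J (Suc d))"
  then obtain t v where tv: "t \<in> X" "v \<in> sgG k K" "u = restrict (\<lambda>h. t (sgmult K v h)) (SubJ J (Suc d))"
    by (auto simp: accepted_patterns_def)
  let ?S = "chv v"
  have ST: "?S \<in> TT" using tv(2) sgG_last by (auto simp: chv_def TT_def)
  define fam where "fam = (\<lambda>j\<in>J \<inter> ?S. restrict (\<lambda>y. t (v @ [j] @ y)) (SubJ (ch j) d))"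
  define u' where "u' = restrict (\<lambda>h. t (sgmult K (butlast v) h)) (SubJ (Jp J ?S) d)"
  have famH: "fam \<in> PiE (J \<inter> ?S) (\<lambda>j. Hon j d)"
  proof -
    have "restrict (\<lambda>y. t (v @ [j] @ y)) (SubJ (ch j) d) \<in> Hon j d" if j: "j \<in> J \<inter> ?S" for j
    proof -
      have "j < k" "v = [] \<or> K (last v) j" using j by (auto simp: chv_def ch_def split: if_splits)
      then have "v @ [j] \<in> sgG k K" using tv(2) by (simp add: sgG_snoc)
      then show ?thesis unfolding Hon_def using tv(1) by (intro CollectI exI[of _ t] exI[of _ "v @ [j]"]) auto
    qed
    then show ?thesis by (auto simp: fam_def)
  qed
  have u'W: "u' \<in> accepted_patterns k K X (SubJ (Jp J ?S) d)"
    unfolding u'_def accepted_patterns_def using tv sgG_butlast by blast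
  have "u = FF J d ?S (t v, fam, u')"
  proof -
    have "t (sgmult K v y) = (if y = [] then t v else if hd y \<in> ?S then fam (hd y) (tl y) else u' (tl y))"
      if y: "y \<in> SubJ J (Suc d)" for y
    proof (cases y)
      case Nil then show ?thesis by simp
    next
      case (Cons j y')
      have jy: "j \<in> J" "j < k" "y' \<in> sgG k K" "y' = [] \<or> K j (hd y')" "length y' \<le> d"
        using y Cons by (auto simp: SubJ_def sgG_Cons)
      have hy: "y' = [] \<or> hd y' < k" using jy(3) by (cases y') (auto simp: sgG_Cons)
      show ?thesis
      proof (cases "j \<in> ?S")
        case True
        then have "v = [] \<or> K (last v) j" by (auto simp: chv_def ch_def split: if_splits)
        then have "sgmult K v (j # y') = v @ [j] @ y'" by (cases "v = []") (auto simp: sgmult_Cons)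
        moreover have "y' \<in> SubJ (ch j) d" using jy hy by (auto simp: SubJ_def ch_def)
        ultimately show ?thesis using True Cons jy by (simp add: fam_def)
      next
        case False
        then have v: "v \<noteq> []" "\<not> K (last v) j" using jy by (auto simp: chv_def ch_def split: if_splits)
        then have "sgmult K v (j # y') = sgmult K (butlast v) y'" by (simp add: sgmult_Cons)
        moreover have "y' \<in> SubJ (Jp J ?S) d" using jy hy False by (auto simp: SubJ_def Jp_def)
        ultimately show ?thesis using False Cons by (simp add: u'_def)
      qed
    qed
    then show ?thesis unfolding FF_def tv(3) by (auto simp: fun_eq_iff)
  qed
  moreover have "(t v, fam, u') \<in> Dom J d ?S" unfolding Dom_def using famH u'W by simp
  ultimately show "u \<in> (\<Union>S\<in>TT. FF J d S ` Dom J d S)" using ST by blast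
qed

lemma card_Jp: "J \<subseteq> {..<k} \<Longrightarrow> card (Jp J S) \<le> m * card (J - S)"
proof -
  assume J: "J \<subseteq> {..<k}"
  have "Jp J S \<subseteq> (\<Union>j\<in>J - S. ch j)" by (auto simp: Jp_def ch_def)
  moreover have "finite (\<Union>j\<in>J - S. ch j)" by (rule finite_subset[of _ "{..<k}"]) (auto simp: ch_def)
  ultimately have "card (Jp J S) \<le> card (\<Union>j\<in>J - S. ch j)" by (rule card_mono[rotated])
  also have "\<dots> \<le> (\<Sum>j\<in>J - S. card (ch j))" by (rule card_UN_le) (rule finite_subset[OF _ finite_lessThan[of k]], use J in auto)
  also have "\<dots> = (\<Sum>j\<in>J - S. m)" using J card_ch by (intro sum.cong) auto
  finally show ?thesis by (simp add: mult.commute)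
qed

context
  fixes G :: "nat \<Rightarrow> real" and \<Gamma> :: real
  assumes HonG: "\<And>c d. c < k \<Longrightarrow> real (card (Hon c d)) \<le> G (Suc d)"
    and G1: "\<And>d. 1 \<le> G d"
    and Grec: "\<And>d. G d ^ m \<le> \<Gamma> * G (Suc d)"
    and Gam1: "1 \<le> \<Gamma>"
begin

definition Lam where "Lam = real (k + 1) * real CARD('a) * \<Gamma> ^ k"

lemma W_bound: "J \<subseteq> {..<k} \<Longrightarrow>
  real (card (accepted_patterns k K X (SubJ J d))) \<le> Lam ^ d * real CARD('a) * G d ^ card J"
proof (induction d arbitrary: J)
  case 0
  have "real (card (accepted_patterns k K X (SubJ J 0))) \<le> real CARD('a)" using W0 by simp
  also have "\<dots> \<le> real CARD('a) * G 0 ^ card J" using G1[of 0] by (simp add: one_le_power)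
  finally show ?case by simp
next
  case (Suc d)
  have finJ: "finite J" using Suc.prems finite_subset by blast
  let ?C = "real CARD('a)"
  have each: "real (card (FF J d S ` Dom J d S)) \<le> ?C * Lam ^ d * ?C * \<Gamma> ^ k * G (Suc d) ^ card J"
    if S: "S \<in> TT" for S
  proof -
    let ?p = "card (J \<inter> S)" and ?r = "card (J - S)"
    have pr: "?p + ?r = card J"
    proof -
      have "J = (J \<inter> S) \<union> (J - S)" by blast
      then have "card J = card ((J \<inter> S) \<union> (J - S))" by simp
      also have "\<dots> = ?p + ?r" by (rule card_Un_disjoint) (use finJ in auto)
      finally show ?thesis by simp
    qed
    have rk: "?r \<le> k" using Suc.prems card_mono[of "{..<k}" "J - S"] by auto
    have JpS: "Jp J S \<subseteq> {..<k}" by (auto simp: Jp_def)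
    have "card (FF J d S ` Dom J d S) \<le> card (Dom J d S)"
      by (rule card_image_le[OF finite_Dom[OF Suc.prems]])
    also have "card (Dom J d S) = CARD('a) * ((\<Prod>j\<in>J \<inter> S. card (Hon j d)) * card (accepted_patterns k K X (SubJ (Jp J S) d)))"
      by (simp add: Dom_def card_cartesian_product card_PiE finJ)
    finally have "real (card (FF J d S ` Dom J d S)) \<le> real (CARD('a) * ((\<Prod>j\<in>J \<inter> S. card (Hon j d)) * card (accepted_patterns k K X (SubJ (Jp J S) d))))"
      by (simp only: of_nat_le_iff)
    also have "\<dots> = ?C * ((\<Prod>j\<in>J \<inter> S. real (card (Hon j d))) * real (card (accepted_patterns k K X (SubJ (Jp J S) d))))"
      by simp
    also have "\<dots> \<le> ?C * (G (Suc d) ^ ?p * (Lam ^ d * ?C * G d ^ card (Jp J S)))"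
    proof (intro mult_left_mono mult_mono)
      have "(\<Prod>j\<in>J \<inter> S. real (card (Hon j d))) \<le> (\<Prod>j\<in>J \<inter> S. G (Suc d))"
        by (rule prod_mono) (use HonG Suc.prems in auto)
      then show "(\<Prod>j\<in>J \<inter> S. real (card (Hon j d))) \<le> G (Suc d) ^ ?p" by simp
      show "real (card (accepted_patterns k K X (SubJ (Jp J S) d))) \<le> Lam ^ d * ?C * G d ^ card (Jp J S)"
        by (rule Suc.IH[OF JpS])
      show "0 \<le> G (Suc d) ^ ?p" using G1[of "Suc d"] by simp
    qed (auto simp: prod_nonneg)
    finally have A: "real (card (FF J d S ` Dom J d S)) \<le> ?C * (G (Suc d) ^ ?p * (Lam ^ d * ?C * G d ^ card (Jp J S)))" .
    have "G d ^ card (Jp J S) \<le> G d ^ (m * ?r)"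
      by (rule power_increasing[OF card_Jp[OF Suc.prems] G1])
    also have "G d ^ (m * ?r) = (G d ^ m) ^ ?r" by (simp add: power_mult)
    also have "\<dots> \<le> (\<Gamma> * G (Suc d)) ^ ?r" by (rule power_mono[OF Grec]) (use G1 in \<open>auto intro: order_trans[OF zero_le_one]\<close>)
    also have "\<dots> = \<Gamma> ^ ?r * G (Suc d) ^ ?r" by (simp add: power_mult_distrib)
    also have "\<dots> \<le> \<Gamma> ^ k * G (Suc d) ^ ?r"
      by (rule mult_right_mono[OF power_increasing[OF rk Gam1]]) (use G1[of "Suc d"] in simp)
    finally have B: "G d ^ card (Jp J S) \<le> \<Gamma> ^ k * G (Suc d) ^ ?r" .
    have Lpos: "0 \<le> Lam" using Gam1 by (simp add: Lam_def)
    have "?C * (G (Suc d) ^ ?p * (Lam ^ d * ?C * G d ^ card (Jp J S))) \<le> ?C * (G (Suc d) ^ ?p * (Lam ^ d * ?C * (\<Gamma> ^ k * G (Suc d) ^ ?r)))"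
      using B G1[of "Suc d"] Lpos by (intro mult_left_mono) auto
    also have "\<dots> = ?C * Lam ^ d * ?C * \<Gamma> ^ k * (G (Suc d) ^ ?p * G (Suc d) ^ ?r)" by (simp add: algebra_simps)
    also have "G (Suc d) ^ ?p * G (Suc d) ^ ?r = G (Suc d) ^ card J" using pr by (simp add: power_add[symmetric])
    finally have Cc: "?C * (G (Suc d) ^ ?p * (Lam ^ d * ?C * G d ^ card (Jp J S))) \<le> ?C * Lam ^ d * ?C * \<Gamma> ^ k * G (Suc d) ^ card J" by simp
    show ?thesis using order_trans[OF A Cc] .
  qed
  have "card (accepted_patterns k K X (SubJ J (Suc d))) \<le> card (\<Union>S\<in>TT. FF J d S ` Dom J d S)"
    by (rule card_mono[OF _ W_decomp]) (auto simp: finite_TT intro!: finite_imageI finite_Dom[OF Suc.prems])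
  also have "\<dots> \<le> (\<Sum>S\<in>TT. card (FF J d S ` Dom J d S))" by (rule card_UN_le[OF finite_TT])
  finally have "real (card (accepted_patterns k K X (SubJ J (Suc d)))) \<le> real (\<Sum>S\<in>TT. card (FF J d S ` Dom J d S))"
    by (simp only: of_nat_le_iff)
  also have "\<dots> = (\<Sum>S\<in>TT. real (card (FF J d S ` Dom J d S)))" by simp
  also have "\<dots> \<le> (\<Sum>S\<in>TT. ?C * Lam ^ d * ?C * \<Gamma> ^ k * G (Suc d) ^ card J)" by (rule sum_mono) (rule each)
  also have "\<dots> = real (card TT) * (?C * Lam ^ d * ?C * \<Gamma> ^ k * G (Suc d) ^ card J)" by simp
  also have "\<dots> \<le> real (k + 1) * (?C * Lam ^ d * ?C * \<Gamma> ^ k * G (Suc d) ^ card J)"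
  proof (rule mult_right_mono)
    show "real (card TT) \<le> real (k + 1)" using card_TT by simp
    have "0 \<le> Lam" using Gam1 by (simp add: Lam_def)
    then show "0 \<le> ?C * Lam ^ d * ?C * \<Gamma> ^ k * G (Suc d) ^ card J"
      using G1[of "Suc d"] Gam1 by simp
  qed
  also have "\<dots> = Lam ^ Suc d * ?C * G (Suc d) ^ card J" by (simp add: Lam_def algebra_simps)
  finally show ?case .
qed

end
end

declare sgmult.simps[simp del]

context TS begin

lemma sgG_hd: "y \<in> sgG k K \<Longrightarrow> y \<noteq> [] \<Longrightarrow> hd y < k"
  by (cases y) (auto simp: sgG_Cons)

lemma Delta_SubJ: "Delta k K n = SubJ {..<k} n"
  unfolding Delta_def SubJ_def using sgG_hd by auto

lemma semiball_eq: assumes i: "i < k" shows "semiball k K [i] n = Cons i ` SubJ (ch i) n"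
proof
  show "semiball k K [i] n \<subseteq> Cons i ` SubJ (ch i) n"
  proof
    fix x assume "x \<in> semiball k K [i] n"
    then obtain h where h: "x = sgmult K [i] h" "h \<in> sgG k K" "length h \<le> n"
      "length (sgmult K [i] h) = length [i] + length h" unfolding semiball_def by blast
    show "x \<in> Cons i ` SubJ (ch i) n"
    proof (cases h)
      case Nil then show ?thesis using h by (auto simp: SubJ_def)
    next
      case (Cons a h')
      show ?thesis
      proof (cases "K i a")
        case True
        then have "x = i # h" using h Cons by (simp add: sgmult_Cons)
        moreover have "a < k" using h Cons by (auto simp: sgG_Cons)
        then have "h \<in> SubJ (ch i) n" using h Cons True by (auto simp: SubJ_def ch_def)
        ultimately show ?thesis by blast
      next
        case False
        then have "sgmult K [i] h = h'" using Cons by (simp add: sgmult_Cons)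
        then show ?thesis using h Cons by simp
      qed
    qed
  qed
next
  show "Cons i ` SubJ (ch i) n \<subseteq> semiball k K [i] n"
  proof
    fix x assume "x \<in> Cons i ` SubJ (ch i) n"
    then obtain h where h: "x = i # h" "h \<in> SubJ (ch i) n" by blast
    have "sgmult K [i] h = i # h" using h by (cases h) (auto simp: SubJ_def ch_def sgmult_Cons)
    moreover have "h \<in> sgG k K" "length h \<le> n" using h by (auto simp: SubJ_def)
    ultimately have "x = sgmult K [i] h \<and> h \<in> sgG k K \<and> length h \<le> n \<and> length (sgmult K [i] h) = length [i] + length h"
      using h by simp
    then show "x \<in> semiball k K [i] n" unfolding semiball_def by blast
  qed
qed

lemma SubJ_psi: assumes c: "c < k" shows "SubJ (ch c) n = psi c ` mary n"
proof
  show "SubJ (ch c) n \<subseteq> psi c ` mary n"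
  proof
    fix y assume "y \<in> SubJ (ch c) n"
    then have "ok c y" "length y \<le> n" using SubJ_ok[OF c] by auto
    then have "psi c (phi c y) = y" "phi c y \<in> mary n" using psi_phi[OF c] by (auto simp: mary_def)
    then show "y \<in> psi c ` mary n" by (metis image_eqI)
  qed
next
  show "psi c ` mary n \<subseteq> SubJ (ch c) n"
    using psi_ok[OF c] SubJ_ok[OF c] psi_len by (auto simp: mary_def)
qed

lemma card_SubJ: assumes c: "c < k" shows "card (SubJ (ch c) n) = (\<Sum>e\<le>n. m ^ e)"
proof -
  have "inj_on (psi c) (mary n)"
    by (rule inj_on_inverseI[of _ "phi c"]) (simp add: phi_psi[OF c] mary_def)
  then have "card (SubJ (ch c) n) = card (mary n)" using SubJ_psi[OF c] by (simp add: card_image)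
  also have "\<dots> = (\<Sum>e\<le>n. m ^ e)" unfolding mary_def using card_lists_length_le[of "{..<m}" n] by simp
  finally show ?thesis .
qed

lemma card_semiball: "i < k \<Longrightarrow> card (semiball k K [i] n) = (\<Sum>e\<le>n. m ^ e)"
  using semiball_eq card_SubJ by (simp add: card_image)

lemma card_Delta: "card (Delta k K (Suc n)) = 1 + k * (\<Sum>e\<le>n. m ^ e)"
proof -
  have eq: "Delta k K (Suc n) = insert [] (\<Union>c\<in>{..<k}. Cons c ` SubJ (ch c) n)"
  proof
    show "Delta k K (Suc n) \<subseteq> insert [] (\<Union>c\<in>{..<k}. Cons c ` SubJ (ch c) n)"
    proof
      fix y assume y: "y \<in> Delta k K (Suc n)"
      show "y \<in> insert [] (\<Union>c\<in>{..<k}. Cons c ` SubJ (ch c) n)"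
      proof (cases y)
        case Nil then show ?thesis by simp
      next
        case (Cons c y')
        then have "c < k" "y' \<in> SubJ (ch c) n" using y sgG_hd
          by (auto simp: Delta_def SubJ_def sgG_Cons ch_def)
        then show ?thesis using Cons by blast
      qed
    qed
  next
    show "insert [] (\<Union>c\<in>{..<k}. Cons c ` SubJ (ch c) n) \<subseteq> Delta k K (Suc n)"
      by (auto simp: Delta_def SubJ_def sgG_Cons ch_def)
  qed
  have "card (\<Union>c\<in>{..<k}. Cons c ` SubJ (ch c) n) = (\<Sum>c<k. card (Cons c ` SubJ (ch c) n))"
    by (rule card_UN_disjoint) (auto intro: finite_SubJ)
  also have "\<dots> = (\<Sum>c<k. (\<Sum>e\<le>n. m ^ e))" by (rule sum.cong) (auto simp: card_image card_SubJ)
  finally have "card (\<Union>c\<in>{..<k}. Cons c ` SubJ (ch c) n) = k * (\<Sum>e\<le>n. m ^ e)" by simp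
  moreover have "finite (\<Union>c\<in>{..<k}. Cons c ` SubJ (ch c) n)" by (auto intro: finite_SubJ)
  moreover have "[] \<notin> (\<Union>c\<in>{..<k}. Cons c ` SubJ (ch c) n)" by auto
  ultimately show ?thesis unfolding eq by (simp add: card_insert_disjoint)
qed

lemma q_upper: assumes i: "i < k"
  shows "card (accepted_patterns k K X (semiball k K [i] n)) \<le> card (accepted_patterns k K X (SubJ (ch i) n))"
proof -
  define R where "R u' = restrict (\<lambda>h. u' (tl h)) (semiball k K [i] n)" for u' :: "nat list \<Rightarrow> 'a"
  have "accepted_patterns k K X (semiball k K [i] n) \<subseteq> R ` accepted_patterns k K X (SubJ (ch i) n)"
  proof
    fix u assume "u \<in> accepted_patterns k K X (semiball k K [i] n)"
    then obtain t g where tg: "t \<in> X" "g \<in> sgG k K" "u = restrict (\<lambda>h. t (sgmult K g h)) (semiball k K [i] n)"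
      by (auto simp: accepted_patterns_def)
    let ?g = "sgmult K g [i]"
    have "[i] \<in> sgG k K" using i by (simp add: sgG_Cons)
    then have gi: "?g \<in> sgG k K" by (rule sgmult_in[OF tg(2)])
    let ?u' = "restrict (\<lambda>h. t (sgmult K ?g h)) (SubJ (ch i) n)"
    have "?u' \<in> accepted_patterns k K X (SubJ (ch i) n)" using tg gi by (auto simp: accepted_patterns_def)
    moreover have "u = R ?u'"
    proof -
      have "t (sgmult K g h) = ?u' (tl h)" if h: "h \<in> semiball k K [i] n" for h
      proof -
        obtain y where y: "h = i # y" "y \<in> SubJ (ch i) n" using h semiball_eq[OF i] by blast
        then have "y = [] \<or> K i (hd y)" by (auto simp: SubJ_def ch_def)
        then have "sgmult K g (i # y) = sgmult K ?g y" by (rule sgmult_assoc_i)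
        then show ?thesis using y by simp
      qed
      then show ?thesis unfolding tg(3) R_def by (rule restrict_ext)
    qed
    ultimately show "u \<in> R ` accepted_patterns k K X (SubJ (ch i) n)" by blast
  qed
  moreover have finA: "finite (accepted_patterns k K X (SubJ (ch i) n))" by (rule finite_acc[OF finite_SubJ])
  ultimately have "card (accepted_patterns k K X (semiball k K [i] n)) \<le> card (R ` accepted_patterns k K X (SubJ (ch i) n))"
    by (simp add: card_mono)
  also have "\<dots> \<le> card (accepted_patterns k K X (SubJ (ch i) n))" by (rule card_image_le[OF finA])
  finally show ?thesis .
qed

context
  assumes E_ne: "E \<noteq> {}"
begin

lemma best_pair: "\<exists>x y. x \<in> E \<and> y \<in> E \<and> A0 x y \<and> MM n = card (V n y)"
proof -
  obtain y where y: "y \<in> Ej r0" "MM n = card (V n y)" using Mx_attained[OF E_ne] unfolding MM_def[OF E_ne] by blast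
  then have "y \<in> Ej (Suc r0)" using r0[OF E_ne] by simp
  then obtain x where "x \<in> Ej r0" "A0 x y" "y \<in> E" by auto
  then show ?thesis using y Ej_E by blast
qed

lemma q_lower: assumes i: "i < k"
  shows "MM n \<le> card (accepted_patterns k K X (semiball k K [i] n))"
proof -
  obtain x y where xy: "x \<in> E" "y \<in> E" "A0 x y" "MM n = card (V n y)" using best_pair by blast
  define Q where "Q u = restrict (\<lambda>h. realt x n (\<lambda>_. u) (sgmult K [] h)) (semiball k K [i] n)" for u
  have maps: "Q u \<in> accepted_patterns k K X (semiball k K [i] n)" if u: "u \<in> V n y" for u
  proof -
    have "realt x n (\<lambda>_. u) \<in> X" by (rule realt_in_X) (use u xy in blast)
    then show ?thesis unfolding Q_def accepted_patterns_def
      by (intro CollectI bexI[of _ "realt x n (\<lambda>_. u)"] bexI[of _ "[]"]) auto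
  qed
  have inj: "inj_on Q (V n y)"
  proof (rule inj_onI)
    fix u v assume u: "u \<in> V n y" and v: "v \<in> V n y" and eq: "Q u = Q v"
    show "u = v"
    proof (rule extensionalityI[of _ "mary n"])
      show "u \<in> extensional (mary n)" "v \<in> extensional (mary n)" using u v by (auto simp: V_def PiE_def)
      fix z assume z: "z \<in> mary n"
      have "i # psi i z \<in> semiball k K [i] n" using semiball_eq[OF i] SubJ_psi[OF i] z by auto
      then have "Q u (i # psi i z) = Q v (i # psi i z)" using eq by simp
      then show "u z = v z" using \<open>i # psi i z \<in> semiball k K [i] n\<close> realt_val[OF i z] by (simp add: Q_def)
    qed
  qed
  have "card (V n y) \<le> card (accepted_patterns k K X (semiball k K [i] n))"
    using card_inj_on_le[OF inj] maps finite_acc[of "semiball k K [i] n"] semiball_eq[OF i] finite_SubJ by auto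
  then show ?thesis using xy by simp
qed

lemma p_lower: "MM n ^ k \<le> card (accepted_patterns k K X (Delta k K (Suc n)))"
proof -
  obtain x y where xy: "x \<in> E" "y \<in> E" "A0 x y" "MM n = card (V n y)" using best_pair by blast
  define Q where "Q fam = restrict (\<lambda>h. realt x n fam (sgmult K [] h)) (Delta k K (Suc n))" for fam
  have maps: "Q fam \<in> accepted_patterns k K X (Delta k K (Suc n))" if f: "fam \<in> PiE {..<k} (\<lambda>_. V n y)" for fam
  proof -
    have "realt x n fam \<in> X" by (rule realt_in_X) (use f xy in auto)
    then show ?thesis unfolding Q_def accepted_patterns_def
      by (intro CollectI bexI[of _ "realt x n fam"] bexI[of _ "[]"]) auto
  qed
  have inj: "inj_on Q (PiE {..<k} (\<lambda>_. V n y))"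
  proof (rule inj_onI)
    fix f g assume f: "f \<in> PiE {..<k} (\<lambda>_. V n y)" and g: "g \<in> PiE {..<k} (\<lambda>_. V n y)" and eq: "Q f = Q g"
    show "f = g"
    proof (rule PiE_ext[OF f g])
      fix c assume c: "c \<in> {..<k}"
      have fc: "f c \<in> V n y" "g c \<in> V n y" using f g c by auto
      show "f c = g c"
      proof (rule extensionalityI[of _ "mary n"])
        show "f c \<in> extensional (mary n)" "g c \<in> extensional (mary n)" using fc by (auto simp: V_def PiE_def)
        fix z assume z: "z \<in> mary n"
        have "c # psi c z \<in> Delta k K (Suc n)"
        proof -
          have "psi c z \<in> SubJ (ch c) n" using SubJ_psi c z by auto
          then show ?thesis using c by (auto simp: Delta_def SubJ_def sgG_Cons ch_def)
        qed
        then have "Q f (c # psi c z) = Q g (c # psi c z)" using eq by simp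
        then show "f c z = g c z" using \<open>c # psi c z \<in> Delta k K (Suc n)\<close> realt_val c z by (simp add: Q_def)
      qed
    qed
  qed
  have finD: "finite (accepted_patterns k K X (Delta k K (Suc n)))"
    using finite_acc finite_SubJ Delta_SubJ by metis
  have "card (PiE {..<k} (\<lambda>_. V n y)) \<le> card (accepted_patterns k K X (Delta k K (Suc n)))"
    using card_inj_on_le[OF inj _ finD] maps by blast
  then show ?thesis using xy by (simp add: card_PiE)
qed

end
end

lemma div_bound:
  fixes x b c \<alpha> n \<beta> :: real
  assumes b: "0 < b" and h: "x \<le> c * b + \<alpha> * n + \<beta>"
  shows "x / b \<le> c + \<alpha> * (n / b) + \<beta> * inverse b"
proof -
  have "x / b \<le> (c * b + \<alpha> * n + \<beta>) / b" using h b by (simp add: divide_right_mono)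
  also have "\<dots> = c + \<alpha> * (n / b) + \<beta> * inverse b" using b by (simp add: field_simps)
  finally show ?thesis .
qed

lemma divdiv: "c \<noteq> 0 \<Longrightarrow> (a / c) / (b / c) = a / (b::real)"
  by (cases "b = 0") (simp_all add: field_simps)

lemma squeeze_aux:
  fixes x l :: "nat \<Rightarrow> real"
  assumes low: "\<forall>\<^sub>F n in sequentially. l n \<le> x n"
    and up: "\<forall>\<^sub>F n in sequentially. x n \<le> c + \<alpha> * (real n / b ^ n) + \<beta> * inverse (b ^ n)"
    and ll: "l \<longlonglongrightarrow> c" and b: "1 < b"
  shows "x \<longlonglongrightarrow> c"
proof (rule tendsto_sandwich[OF low up ll])
  have "(\<lambda>n. real n / b ^ n) \<longlonglongrightarrow> 0" using lim_n_over_pown[of b] b by simp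
  moreover have "(\<lambda>n. inverse (b ^ n)) \<longlonglongrightarrow> 0" by (rule LIMSEQ_inverse_realpow_zero[OF b])
  ultimately have "(\<lambda>n. c + \<alpha> * (real n / b ^ n) + \<beta> * inverse (b ^ n)) \<longlonglongrightarrow> c + \<alpha> * 0 + \<beta> * 0"
    by (intro tendsto_intros) auto
  then show "(\<lambda>n. c + \<alpha> * (real n / b ^ n) + \<beta> * inverse (b ^ n)) \<longlonglongrightarrow> c" by simp
qed

lemma geo_sum_real: "(m::real) \<noteq> 1 \<Longrightarrow> (\<Sum>e\<le>n. m ^ e) * (m - 1) = m ^ Suc n - 1"
  by (induction n) (auto simp: algebra_simps)

lemma s_over_pow:
  assumes m: "2 \<le> (m::nat)"
  shows "(\<lambda>n. real (\<Sum>e\<le>n. m ^ e) / real m ^ n) \<longlonglongrightarrow> real m / (real m - 1)"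
proof -
  have eq: "real (\<Sum>e\<le>n. m ^ e) / real m ^ n = (real m - inverse (real m ^ n)) / (real m - 1)" for n
  proof -
    have m1: "real m - 1 \<noteq> 0" "real m ^ n \<noteq> 0" using m by auto
    have "real (\<Sum>e\<le>n. m ^ e) = (\<Sum>e\<le>n. real m ^ e)" by simp
    also have "\<dots> = (real m ^ Suc n - 1) / (real m - 1)" using geo_sum_real[of "real m" n] m
      by (simp add: eq_divide_eq)
    finally have h: "real (\<Sum>e\<le>n. m ^ e) = (real m ^ Suc n - 1) / (real m - 1)" .
    show ?thesis unfolding h using m1 by (simp add: field_simps)
  qed
  have "(\<lambda>n. (real m - inverse (real m ^ n)) / (real m - 1)) \<longlonglongrightarrow> (real m - 0) / (real m - 1)"
    using m by (intro tendsto_intros LIMSEQ_inverse_realpow_zero) auto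
  then show ?thesis unfolding eq by simp
qed

context TS begin

context
  assumes E_ne: "E \<noteq> {}" and m2: "2 \<le> m"
begin

definition GG where "GG d = (if d = 0 then 1 else exp (mu * real m ^ (d - 1) + C0))"
definition Gam where "Gam = exp ((real m - 1) * C0)"

lemma GG1: "1 \<le> GG d"
proof -
  have "0 \<le> mu * real m ^ (d - 1) + C0" using mu_nonneg[OF E_ne m2] C0_nonneg[OF E_ne m2] by simp
  then show ?thesis by (simp add: GG_def)
qed

lemma Gam1: "1 \<le> Gam"
  using C0_nonneg[OF E_ne m2] m2 by (simp add: Gam_def)

lemma HonGG: "c < k \<Longrightarrow> real (card (Hon c d)) \<le> GG (Suc d)"
proof -
  assume c: "c < k"
  have "real (card (Hon c d)) \<le> real (CARD('a) * Mx 0 d)" using Hon_card[OF E_ne c] by (simp only: of_nat_le_iff)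
  also have "\<dots> \<le> exp (mu * real m ^ d + C0)" by (rule Hon_abs[OF E_ne m2])
  finally show ?thesis by (simp add: GG_def)
qed

lemma GGrec: "GG d ^ m \<le> Gam * GG (Suc d)"
proof (cases d)
  case 0
  have "1 * 1 \<le> Gam * GG (Suc 0)" by (rule mult_mono[OF Gam1 GG1]) (use Gam1 in auto)
  then show ?thesis using 0 by (simp add: GG_def)
next
  case (Suc d')
  have "GG d ^ m = exp (real m * (mu * real m ^ d' + C0))" using Suc by (simp add: GG_def exp_of_nat_mult[symmetric])
  also have "real m * (mu * real m ^ d' + C0) = (real m - 1) * C0 + (mu * real m ^ Suc d' + C0)"
    by (simp add: algebra_simps)
  finally show ?thesis using Suc by (simp add: GG_def Gam_def exp_add)
qed

lemma Wb: "J \<subseteq> {..<k} \<Longrightarrow>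
  real (card (accepted_patterns k K X (SubJ J d))) \<le> Lam Gam ^ d * real CARD('a) * GG d ^ card J"
  by (rule W_bound[of GG Gam]) (use HonGG GG1 GGrec Gam1 in auto)

definition LL where "LL = real (k + 1) * real CARD('a) * Gam ^ k"

lemma LL_eq: "Lam Gam = LL"
proof -
  have "Lam Gam = real (k + 1) * real CARD('a) * Gam ^ k"
    by (rule Lam_def[of GG Gam]) (use HonGG GG1 GGrec Gam1 in auto)
  then show ?thesis by (simp add: LL_def)
qed

lemma LL1: "1 \<le> LL"
proof -
  have "1 * 1 \<le> real (k + 1) * real CARD('a)" by (rule mult_mono) auto
  also have "\<dots> \<le> real (k + 1) * real CARD('a) * Gam ^ k" using Gam1 by (simp add: one_le_power)
  finally show ?thesis by (simp add: LL_def)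
qed

lemma log_upper:
  assumes J: "J \<subseteq> {..<k}" and n: "1 \<le> n" and pos: "1 \<le> card (accepted_patterns k K X (SubJ J n))"
  shows "ln (real (card (accepted_patterns k K X (SubJ J n))))
    \<le> real n * ln LL + ln (real CARD('a)) + real (card J) * (mu * real m ^ (n - 1) + C0)"
proof -
  have "real (card (accepted_patterns k K X (SubJ J n))) \<le> LL ^ n * real CARD('a) * GG n ^ card J"
    using Wb[OF J, of n] LL_eq by simp
  then have "ln (real (card (accepted_patterns k K X (SubJ J n)))) \<le> ln (LL ^ n * real CARD('a) * GG n ^ card J)"
    using pos by (intro ln_mono) auto
  also have "\<dots> = real n * ln LL + ln (real CARD('a)) + real (card J) * (mu * real m ^ (n - 1) + C0)"
    using LL1 n by (simp add: ln_mult ln_realpow GG_def)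
  finally show ?thesis .
qed

lemma lim_q:
  assumes i: "i < k"
  shows "(\<lambda>n. ln (real (card (accepted_patterns k K X (semiball k K [i] n)))) / real (card (semiball k K [i] n)))
     \<longlonglongrightarrow> mu * (real m - 1) / real m"
proof -
  let ?q = "\<lambda>n. real (card (accepted_patterns k K X (semiball k K [i] n)))"
  have qpos: "1 \<le> ?q n" for n using q_lower[OF E_ne i, of n] MM_pos[OF E_ne, of n] by linarith
  have mpos: "0 < real m ^ n" for n using m2 by simp
  have A: "(\<lambda>n. ln (?q n) / real m ^ n) \<longlonglongrightarrow> mu"
  proof (rule squeeze_aux[where l = aa and \<alpha> = "ln LL" and \<beta> = "ln (real CARD('a)) + real m * C0" and b = "real m"])
    show "\<forall>\<^sub>F n in sequentially. aa n \<le> ln (?q n) / real m ^ n"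
    proof (intro always_eventually allI)
      fix n
      have "ln (real (MM n)) \<le> ln (?q n)" using q_lower[OF E_ne i, of n] MM_real_pos[OF E_ne m2, of n] by (intro ln_mono) auto
      then show "aa n \<le> ln (?q n) / real m ^ n" unfolding aa_def[OF E_ne m2] using mpos[of n] by (simp add: divide_right_mono)
    qed
    show "\<forall>\<^sub>F n in sequentially. ln (?q n) / real m ^ n \<le> mu + ln LL * (real n / real m ^ n) + (ln (real CARD('a)) + real m * C0) * inverse (real m ^ n)"
    proof (rule eventually_sequentiallyI[of 1])
      fix n :: nat assume n1: "1 \<le> n"
      have "?q n \<le> real (card (accepted_patterns k K X (SubJ (ch i) n)))" using q_upper[OF i, of n] by simp
      then have "ln (?q n) \<le> ln (real (card (accepted_patterns k K X (SubJ (ch i) n))))"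
        using qpos[of n] by (intro ln_mono) auto
      also have "\<dots> \<le> real n * ln LL + ln (real CARD('a)) + real (card (ch i)) * (mu * real m ^ (n - 1) + C0)"
        using qpos[of n] q_upper[OF i, of n] n1 by (intro log_upper) (auto simp: ch_def)
      also have "real (card (ch i)) * (mu * real m ^ (n - 1) + C0) = mu * real m ^ n + real m * C0"
        using card_ch[OF i] n1 by (simp add: algebra_simps power_eq_if)
      finally have "ln (?q n) \<le> mu * real m ^ n + ln LL * real n + (ln (real CARD('a)) + real m * C0)" by (simp add: algebra_simps)
      then show "ln (?q n) / real m ^ n \<le> mu + ln LL * (real n / real m ^ n) + (ln (real CARD('a)) + real m * C0) * inverse (real m ^ n)"
        by (rule div_bound[OF mpos])
    qed
    show "aa \<longlonglongrightarrow> mu" by (rule aa_lim[OF E_ne m2])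
    show "1 < real m" using m2 by simp
  qed
  have B: "(\<lambda>n. real (card (semiball k K [i] n)) / real m ^ n) \<longlonglongrightarrow> real m / (real m - 1)"
    using s_over_pow[OF m2] card_semiball[OF i] by simp
  have "(\<lambda>n. (ln (?q n) / real m ^ n) / (real (card (semiball k K [i] n)) / real m ^ n)) \<longlonglongrightarrow> mu / (real m / (real m - 1))"
    using m2 by (intro tendsto_divide A B) auto
  moreover have "(\<lambda>n. (ln (?q n) / real m ^ n) / (real (card (semiball k K [i] n)) / real m ^ n)) = (\<lambda>n. ln (?q n) / real (card (semiball k K [i] n)))"
    by (rule ext, rule divdiv) (use mpos in auto)
  moreover have "mu / (real m / (real m - 1)) = mu * (real m - 1) / real m"
    using m2 by (simp add: field_simps)
  ultimately show ?thesis by metis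
qed

lemma lim_p:
  shows "(\<lambda>n. ln (real (card (accepted_patterns k K X (Delta k K n)))) / real (card (Delta k K n)))
     \<longlonglongrightarrow> mu * (real m - 1) / real m"
proof -
  let ?p = "\<lambda>n. real (card (accepted_patterns k K X (Delta k K n)))"
  have ppos: "1 \<le> ?p (Suc n)" for n
  proof -
    have "1 \<le> MM n ^ k" using MM_pos[OF E_ne, of n] by simp
    then show ?thesis using p_lower[OF E_ne, of n] by linarith
  qed
  have mpos: "0 < real m ^ n" for n using m2 by simp
  have A: "(\<lambda>n. ln (?p (Suc n)) / real m ^ n) \<longlonglongrightarrow> real k * mu"
  proof (rule squeeze_aux[where l = "\<lambda>n. real k * aa n" and \<alpha> = "ln LL" and \<beta> = "ln LL + ln (real CARD('a)) + real k * C0" and b = "real m"])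
    show "\<forall>\<^sub>F n in sequentially. real k * aa n \<le> ln (?p (Suc n)) / real m ^ n"
    proof (intro always_eventually allI)
      fix n
      have "real (MM n) ^ k \<le> ?p (Suc n)" using p_lower[OF E_ne, of n] by (metis of_nat_le_iff of_nat_power)
      then have "ln (real (MM n) ^ k) \<le> ln (?p (Suc n))" using MM_real_pos[OF E_ne m2, of n] by (intro ln_mono) auto
      then have "real k * ln (real (MM n)) \<le> ln (?p (Suc n))" by (simp add: ln_realpow)
      then show "real k * aa n \<le> ln (?p (Suc n)) / real m ^ n" unfolding aa_def[OF E_ne m2] using mpos[of n]
        by (simp add: divide_right_mono le_divide_eq)
    qed
    show "\<forall>\<^sub>F n in sequentially. ln (?p (Suc n)) / real m ^ n \<le> real k * mu + ln LL * (real n / real m ^ n) + (ln LL + ln (real CARD('a)) + real k * C0) * inverse (real m ^ n)"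
    proof (intro always_eventually allI)
      fix n :: nat
      have "ln (?p (Suc n)) \<le> real (Suc n) * ln LL + ln (real CARD('a)) + real (card {..<k}) * (mu * real m ^ (Suc n - 1) + C0)"
        unfolding Delta_SubJ using ppos[of n] by (intro log_upper) (auto simp: Delta_SubJ)
      then have "ln (?p (Suc n)) \<le> real k * mu * real m ^ n + ln LL * real n + (ln LL + ln (real CARD('a)) + real k * C0)"
        by (simp add: algebra_simps)
      then show "ln (?p (Suc n)) / real m ^ n \<le> real k * mu + ln LL * (real n / real m ^ n) + (ln LL + ln (real CARD('a)) + real k * C0) * inverse (real m ^ n)"
        by (rule div_bound[OF mpos])
    qed
    show "(\<lambda>n. real k * aa n) \<longlonglongrightarrow> real k * mu" by (intro tendsto_intros aa_lim[OF E_ne m2])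
    show "1 < real m" using m2 by simp
  qed
  have B: "(\<lambda>n. real (card (Delta k K (Suc n))) / real m ^ n) \<longlonglongrightarrow> real k * (real m / (real m - 1))"
  proof -
    have "(\<lambda>n. inverse (real m ^ n) + real k * (real (\<Sum>e\<le>n. m ^ e) / real m ^ n)) \<longlonglongrightarrow> 0 + real k * (real m / (real m - 1))"
      using m2 by (intro tendsto_intros LIMSEQ_inverse_realpow_zero s_over_pow) auto
    moreover have "real (card (Delta k K (Suc n))) / real m ^ n = inverse (real m ^ n) + real k * (real (\<Sum>e\<le>n. m ^ e) / real m ^ n)" for n
      unfolding card_Delta using mpos[of n] by (simp add: field_simps)
    ultimately show ?thesis by simp
  qed
  have "(\<lambda>n. (ln (?p (Suc n)) / real m ^ n) / (real (card (Delta k K (Suc n))) / real m ^ n)) \<longlonglongrightarrow> (real k * mu) / (real k * (real m / (real m - 1)))"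
    using m2 k_pos by (intro tendsto_divide A B) auto
  moreover have "(\<lambda>n. (ln (?p (Suc n)) / real m ^ n) / (real (card (Delta k K (Suc n))) / real m ^ n)) = (\<lambda>n. ln (?p (Suc n)) / real (card (Delta k K (Suc n))))"
    by (rule ext, rule divdiv) (use mpos in auto)
  moreover have "(real k * mu) / (real k * (real m / (real m - 1))) = mu * (real m - 1) / real m"
    using k_pos m2 by (simp add: field_simps)
  ultimately have "(\<lambda>n. ln (?p (Suc n)) / real (card (Delta k K (Suc n)))) \<longlonglongrightarrow> mu * (real m - 1) / real m"
    by metis
  then show ?thesis by (rule LIMSEQ_imp_Suc)
qed

end
end

lemma dd: "y \<noteq> 0 \<Longrightarrow> x / y * (y / z) = x / (z::real)"
  by (cases "z = 0") (simp_all add: field_simps)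

lemma fekete:
  fixes c :: "nat \<Rightarrow> real"
  assumes sub: "\<And>a b. c (a + b) \<le> c a + c b" and nn: "\<And>n. 0 \<le> c n"
  shows "(\<lambda>n. c n / real n) \<longlonglongrightarrow> (INF n\<in>{1..}. c n / real n)"
proof -
  let ?L = "INF n\<in>{1..}. c n / real n"
  have bdd: "bdd_below ((\<lambda>n. c n / real n) ` {1..})" using nn by (intro bdd_belowI2[of _ 0]) auto
  have Lle: "?L \<le> c n / real n" if "1 \<le> n" for n using that by (intro cINF_lower[OF bdd]) auto
  have mult: "c (q * N + r) \<le> real q * c N + c r" for q N r
  proof (induction q)
    case 0 then show ?case by simp
  next
    case (Suc q)
    have "c (Suc q * N + r) = c (N + (q * N + r))" by (simp add: algebra_simps)
    also have "\<dots> \<le> c N + c (q * N + r)" by (rule sub)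
    also have "\<dots> \<le> c N + (real q * c N + c r)" using Suc by simp
    finally show ?case by (simp add: algebra_simps)
  qed
  show ?thesis
  proof (rule order_tendstoI)
    fix a assume "a < ?L"
    then show "\<forall>\<^sub>F n in sequentially. a < c n / real n"
      using Lle by (intro eventually_sequentiallyI[of 1]) (auto intro: less_le_trans)
  next
    fix a assume a: "?L < a"
    obtain N where N: "N \<in> {1..}" "c N / real N < (?L + a) / 2"
    proof -
      have "?L < (?L + a) / 2" using a by simp
      moreover have ne: "{1::nat..} \<noteq> {}" by auto
      ultimately have "\<exists>x\<in>{1..}. c x / real x < (?L + a) / 2" using cINF_less_iff[OF ne bdd] by blast
      then show ?thesis using that by blast
    qed
    then have N1: "1 \<le> N" by simp
    define M where "M = Max (c ` {..<N})"
    have cM: "c r \<le> M" if "r < N" for r unfolding M_def using that by (intro Max_ge) auto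
    have M0: "0 \<le> M" using cM[of 0] nn[of 0] N1 by linarith
    define e where "e = (a - ?L) / 2"
    have e: "0 < e" using a by (simp add: e_def)
    have "\<forall>\<^sub>F n in sequentially. M / real n < e"
    proof -
      have "(\<lambda>n. M / real n) \<longlonglongrightarrow> 0" by (rule lim_const_over_n)
      then show ?thesis using e by (simp add: order_tendsto_iff)
    qed
    then show "\<forall>\<^sub>F n in sequentially. c n / real n < a"
    proof (rule eventually_mono[OF eventually_conj[OF _ eventually_ge_at_top[of 1]]])
      fix n :: nat assume h: "M / real n < e \<and> 1 \<le> n"
      then have n1: "1 \<le> n" by simp
      define q where "q = n div N"
      define r where "r = n mod N"
      have nq: "n = q * N + r" by (simp add: q_def r_def)
      have rN: "r < N" using N1 by (simp add: r_def)
      have "c n \<le> real q * c N + c r" using mult nq by metis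
      also have "\<dots> \<le> real q * c N + M" using cM[OF rN] by simp
      finally have cn: "c n \<le> real q * c N + M" .
      have qN: "real q * real N \<le> real n" using nq by (metis le_add1 of_nat_le_iff of_nat_mult)
      have "real q * c N = (real q * real N) * (c N / real N)" using N1 by simp
      also have "\<dots> \<le> real n * (c N / real N)" using qN nn[of N] N1 by (intro mult_right_mono) auto
      finally have "c n \<le> real n * (c N / real N) + M" using cn by linarith
      then have "c n / real n \<le> c N / real N + M / real n" using n1 by (simp add: field_simps)
      also have "\<dots> < (?L + a) / 2 + e" using N(2) h by linarith
      also have "\<dots> = a" by (simp add: e_def field_simps)
      finally show "c n / real n < a" .
    qed
  qed
qed

context TS begin

context
  assumes k1: "k = 1" and Xne: "X \<noteq> {}"
begin

lemma K00: "K 0 0"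
proof -
  have "card {j. j < k \<and> K 0 j} = m" using rows k1 by simp
  then have "0 < card {j. j < k \<and> K 0 j}" using m_pos by simp
  then have "{j. j < k \<and> K 0 j} \<noteq> {}" by (metis card.empty less_irrefl)
  then obtain j where "j < k" "K 0 j" by auto
  moreover have "j = 0" using \<open>j < k\<close> k1 by simp
  ultimately show ?thesis by simp
qed

lemma sg1: "h \<in> sgG k K \<Longrightarrow> set h \<subseteq> {0}"
  using k1 by (auto simp: sgG_def)

lemma sg1_iff: "h \<in> sgG k K \<longleftrightarrow> set h \<subseteq> {0}"
proof
  assume "set h \<subseteq> {0}"
  then have z: "l < length h \<Longrightarrow> h ! l = 0" for l using nth_mem by blast
  show "h \<in> sgG k K" unfolding sgG_def
  proof (intro CollectI conjI allI impI)
    show "set h \<subseteq> {..<k}" using \<open>set h \<subseteq> {0}\<close> k1 by auto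
    fix l assume "Suc l < length h"
    then show "K (h ! l) (h ! Suc l)" using z[of l] z[of "Suc l"] K00 by simp
  qed
qed (rule sg1)

lemma mult1: "g \<in> sgG k K \<Longrightarrow> h \<in> sgG k K \<Longrightarrow> sgmult K g h = g @ h"
proof (cases h)
  case Nil then show ?thesis by simp
next
  case (Cons x y)
  assume g: "g \<in> sgG k K" and h: "h \<in> sgG k K"
  show ?thesis
  proof (cases "g = []")
    case True then show ?thesis by simp
  next
    case False
    then have "last g = 0" using sg1[OF g] by (metis last_in_set singletonD subsetD)
    moreover have "x = 0" using sg1[OF h] Cons by auto
    ultimately show ?thesis using False Cons K00 by (simp add: sgmult_Cons)
  qed
qed

lemma acc_pos: "finite H \<Longrightarrow> 1 \<le> card (accepted_patterns k K X H)"
proof -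
  assume H: "finite H"
  obtain t where "t \<in> X" using Xne by auto
  then have "restrict (\<lambda>h. t (sgmult K [] h)) H \<in> accepted_patterns k K X H"
    unfolding accepted_patterns_def mem_Collect_eq using sgG_Nil by blast
  then show ?thesis using finite_acc[OF H] by (metis One_nat_def Suc_leI card_gt_0_iff empty_iff)
qed

lemma Delta1: "Delta k K n = {h. set h \<subseteq> {0} \<and> length h \<le> n}"
  unfolding Delta_def using sg1_iff by auto

lemma p_sub: "card (accepted_patterns k K X (Delta k K (a + b + 1)))
   \<le> card (accepted_patterns k K X (Delta k K a)) * card (accepted_patterns k K X (Delta k K b))"
proof -
  define F where "F = (\<lambda>(u1 :: nat list \<Rightarrow> 'a, u2 :: nat list \<Rightarrow> 'a). restrict (\<lambda>h. if length h \<le> a then u1 h else u2 (drop (a + 1) h)) (Delta k K (a + b + 1)))"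
  have sub: "accepted_patterns k K X (Delta k K (a + b + 1)) \<subseteq> F ` (accepted_patterns k K X (Delta k K a) \<times> accepted_patterns k K X (Delta k K b))"
  proof
    fix u assume "u \<in> accepted_patterns k K X (Delta k K (a + b + 1))"
    then obtain t g where tg: "t \<in> X" "g \<in> sgG k K" "u = restrict (\<lambda>h. t (sgmult K g h)) (Delta k K (a + b + 1))"
      by (auto simp: accepted_patterns_def)
    let ?g' = "g @ replicate (a + 1) 0"
    have g': "?g' \<in> sgG k K" using tg(2) sg1_iff by auto
    let ?u1 = "restrict (\<lambda>h. t (sgmult K g h)) (Delta k K a)"
    let ?u2 = "restrict (\<lambda>h. t (sgmult K ?g' h)) (Delta k K b)"
    have "?u1 \<in> accepted_patterns k K X (Delta k K a)"
      unfolding accepted_patterns_def mem_Collect_eq using tg(1,2) by blast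
    moreover have "?u2 \<in> accepted_patterns k K X (Delta k K b)"
      unfolding accepted_patterns_def mem_Collect_eq using tg(1) g' by blast
    moreover have "u = F (?u1, ?u2)"
    proof -
      have "t (sgmult K g h) = (if length h \<le> a then ?u1 h else ?u2 (drop (a + 1) h))"
        if h: "h \<in> Delta k K (a + b + 1)" for h
      proof (cases "length h \<le> a")
        case True then show ?thesis using h by (simp add: Delta1)
      next
        case False
        have hs: "set h \<subseteq> {0}" "length h \<le> a + b + 1" using h by (auto simp: Delta1)
        have dh: "drop (a + 1) h \<in> Delta k K b" using hs by (auto simp: Delta1 dest: in_set_dropD)
        have "h = take (a + 1) h @ drop (a + 1) h" by simp
        moreover have st: "\<forall>y\<in>set (take (a + 1) h). y = 0" using hs by (auto dest: in_set_takeD)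
        have "replicate (length (take (a + 1) h)) 0 = take (a + 1) h" by (rule replicate_length_same[OF st])
        moreover have "length (take (a + 1) h) = a + 1" using False by simp
        ultimately have eqh: "h = replicate (a + 1) 0 @ drop (a + 1) h" by simp
        have hsg: "h \<in> sgG k K" using hs(1) sg1_iff by simp
        have mm1: "sgmult K g h = g @ h" by (rule mult1[OF tg(2) hsg])
        have "set (drop (a + 1) h) \<subseteq> {0}" using hs(1) by (meson in_set_dropD subset_iff)
        then have dsg: "drop (a + 1) h \<in> sgG k K" using sg1_iff by simp
        have mm2: "sgmult K ?g' (drop (a + 1) h) = ?g' @ drop (a + 1) h"
          by (rule mult1[OF g' dsg])
        have "?g' @ drop (a + 1) h = g @ (replicate (a + 1) 0 @ drop (a + 1) h)" by simp
        also have "\<dots> = g @ h" using eqh[symmetric] by simp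
        finally have e3: "?g' @ drop (a + 1) h = g @ h" .
        have "(if length h \<le> a then ?u1 h else ?u2 (drop (a + 1) h)) = t (sgmult K ?g' (drop (a + 1) h))"
          using False dh by simp
        also have "\<dots> = t (sgmult K g h)" using mm1 mm2 e3 by simp
        finally show ?thesis by simp
      qed
      then show ?thesis unfolding tg(3) F_def by (auto intro!: restrict_ext)
    qed
    ultimately show "u \<in> F ` (accepted_patterns k K X (Delta k K a) \<times> accepted_patterns k K X (Delta k K b))" by blast
  qed
  have fin: "finite (Delta k K n)" for n unfolding Delta_SubJ by (rule finite_SubJ)
  have finP: "finite (accepted_patterns k K X (Delta k K a) \<times> accepted_patterns k K X (Delta k K b))"
    by (intro finite_cartesian_product finite_acc fin)
  have "card (accepted_patterns k K X (Delta k K (a + b + 1))) \<le> card (F ` (accepted_patterns k K X (Delta k K a) \<times> accepted_patterns k K X (Delta k K b)))"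
    by (rule card_mono[OF finite_imageI[OF finP] sub])
  also have "\<dots> \<le> card (accepted_patterns k K X (Delta k K a) \<times> accepted_patterns k K X (Delta k K b))"
    by (rule card_image_le[OF finP])
  finally show ?thesis by (simp add: card_cartesian_product)
qed

lemma ch0: "ch 0 = {0}" unfolding ch_def using k1 K00 by auto

lemma m1: "m = 1"
proof -
  have "{j. j < k \<and> K 0 j} = {0}" using k1 K00 by auto
  then show ?thesis using rows[of 0] k1 by simp
qed

lemma SubJ_Delta: "SubJ (ch 0) n = Delta k K n"
  unfolding Delta_SubJ ch0 using k1 by (simp add: lessThan_Suc)

lemma q_le_p: "card (accepted_patterns k K X (semiball k K [0] n)) \<le> card (accepted_patterns k K X (Delta k K n))"
  using q_upper[of 0 n] k1 SubJ_Delta by simp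

lemma p_le_q: "card (accepted_patterns k K X (Delta k K (Suc n))) \<le> CARD('a) * card (accepted_patterns k K X (semiball k K [0] n))"
proof -
  have k0: "0 < k" using k1 by simp
  have SB: "semiball k K [0] n = Cons 0 ` Delta k K n" using semiball_eq[OF k0] SubJ_Delta by simp
  define F where "F = (\<lambda>(a :: 'a, v :: nat list \<Rightarrow> 'a). restrict (\<lambda>h. if h = [] then a else v h) (Delta k K (Suc n)))"
  have sub: "accepted_patterns k K X (Delta k K (Suc n)) \<subseteq> F ` (UNIV \<times> accepted_patterns k K X (semiball k K [0] n))"
  proof
    fix u assume "u \<in> accepted_patterns k K X (Delta k K (Suc n))"
    then obtain t g where tg: "t \<in> X" "g \<in> sgG k K" "u = restrict (\<lambda>h. t (sgmult K g h)) (Delta k K (Suc n))"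
      by (auto simp: accepted_patterns_def)
    let ?v = "restrict (\<lambda>h. t (sgmult K g h)) (semiball k K [0] n)"
    have "?v \<in> accepted_patterns k K X (semiball k K [0] n)" using tg by (auto simp: accepted_patterns_def)
    moreover have "u = F (t g, ?v)"
    proof -
      have "t (sgmult K g h) = (if h = [] then t g else ?v h)" if h: "h \<in> Delta k K (Suc n)" for h
      proof (cases h)
        case Nil then show ?thesis by simp
      next
        case (Cons x y)
        then have "x = 0" "y \<in> Delta k K n" using h by (auto simp: Delta1)
        then have "h \<in> semiball k K [0] n" using SB Cons by simp
        then show ?thesis using Cons by simp
      qed
      then show ?thesis unfolding tg(3) F_def by (auto intro!: restrict_ext)
    qed
    ultimately show "u \<in> F ` (UNIV \<times> accepted_patterns k K X (semiball k K [0] n))" by blast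
  qed
  have finS: "finite (semiball k K [0] n)" unfolding SB Delta_SubJ by (intro finite_imageI finite_SubJ)
  have "card (accepted_patterns k K X (Delta k K (Suc n))) \<le> card (F ` (UNIV \<times> accepted_patterns k K X (semiball k K [0] n)))"
  proof (rule card_mono[OF _ sub])
    have "finite (accepted_patterns k K X (semiball k K [0] n))" by (rule finite_acc[OF finS])
    then show "finite (F ` (UNIV \<times> accepted_patterns k K X (semiball k K [0] n)))" by simp
  qed
  also have "\<dots> \<le> card ((UNIV :: 'a set) \<times> accepted_patterns k K X (semiball k K [0] n))"
    by (rule card_image_le) (simp add: finite_acc[OF finS])
  finally show ?thesis by (simp add: card_cartesian_product)
qed

lemma card_Delta1: "card (Delta k K n) = n + 1"
proof (cases n)
  case 0
  have "Delta k K 0 = {[]}" by (auto simp: Delta_def)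
  then show ?thesis using 0 by simp
next
  case (Suc n')
  then show ?thesis using card_Delta[of n'] k1 m1 by simp
qed

lemma card_semi1: "card (semiball k K [0] n) = n + 1"
  using card_semiball[of 0 n] k1 m1 by simp

definition cc where "cc n = (if n = 0 then 0 else ln (real (card (accepted_patterns k K X (Delta k K (n - 1))))))"

lemma finD: "finite (Delta k K n)" unfolding Delta_SubJ by (rule finite_SubJ)

lemma pD_pos: "1 \<le> real (card (accepted_patterns k K X (Delta k K n)))"
  using acc_pos[OF finD] by simp

lemma cc_nn: "0 \<le> cc n" using pD_pos by (simp add: cc_def)

lemma cc_sub: "cc (a + b) \<le> cc a + cc b"
proof (cases "a = 0 \<or> b = 0")
  case True then show ?thesis using cc_nn by (auto simp: cc_def)
next
  case False
  then have ab: "a + b - 1 = (a - 1) + (b - 1) + 1" by arith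
  have "card (accepted_patterns k K X (Delta k K (a + b - 1))) \<le>
     card (accepted_patterns k K X (Delta k K (a - 1))) * card (accepted_patterns k K X (Delta k K (b - 1)))"
    unfolding ab by (rule p_sub)
  then have "real (card (accepted_patterns k K X (Delta k K (a + b - 1)))) \<le>
     real (card (accepted_patterns k K X (Delta k K (a - 1))) * card (accepted_patterns k K X (Delta k K (b - 1))))"
    by (simp only: of_nat_le_iff)
  then have "real (card (accepted_patterns k K X (Delta k K (a + b - 1)))) \<le>
     real (card (accepted_patterns k K X (Delta k K (a - 1)))) * real (card (accepted_patterns k K X (Delta k K (b - 1))))"
    by simp
  then have "ln (real (card (accepted_patterns k K X (Delta k K (a + b - 1))))) \<le>
     ln (real (card (accepted_patterns k K X (Delta k K (a - 1)))) * real (card (accepted_patterns k K X (Delta k K (b - 1)))))"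
    using pD_pos[of "a + b - 1"] by (intro ln_mono) auto
  also have "\<dots> = cc a + cc b"
  proof -
    have pa: "0 < real (card (accepted_patterns k K X (Delta k K (a - 1))))" using pD_pos[of "a - 1"] by linarith
    have pb: "0 < real (card (accepted_patterns k K X (Delta k K (b - 1))))" using pD_pos[of "b - 1"] by linarith
    show ?thesis using False pa pb by (simp add: cc_def ln_mult)
  qed
  finally show ?thesis using False by (simp add: cc_def)
qed

definition L1 where "L1 = (INF n\<in>{1..}. cc n / real n)"

lemma lim1_p: "(\<lambda>n. ln (real (card (accepted_patterns k K X (Delta k K n)))) / real (card (Delta k K n))) \<longlonglongrightarrow> L1"
proof -
  have "(\<lambda>n. cc n / real n) \<longlonglongrightarrow> L1" unfolding L1_def by (rule fekete[OF cc_sub cc_nn])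
  then have "(\<lambda>n. cc (Suc n) / real (Suc n)) \<longlonglongrightarrow> L1" by (rule LIMSEQ_Suc)
  then show ?thesis by (simp add: cc_def card_Delta1)
qed

lemma lim1_q: "(\<lambda>n. ln (real (card (accepted_patterns k K X (semiball k K [0] n)))) / real (card (semiball k K [0] n))) \<longlonglongrightarrow> L1"
proof -
  let ?p = "\<lambda>n. real (card (accepted_patterns k K X (Delta k K n)))"
  let ?q = "\<lambda>n. real (card (accepted_patterns k K X (semiball k K [0] n)))"
  have k0: "0 < k" using k1 by simp
  have finS: "finite (semiball k K [0] n)" for n unfolding semiball_eq[OF k0] by (intro finite_imageI finite_SubJ)
  have qpos: "1 \<le> ?q n" for n using acc_pos[OF finS] by simp
  have up: "ln (?q n) / real (n + 1) \<le> ln (?p n) / real (n + 1)" for n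
    using q_le_p[of n] qpos[of n] by (intro divide_right_mono ln_mono) auto
  have low: "(ln (?p (Suc n)) - ln (real CARD('a))) / real (n + 1) \<le> ln (?q n) / real (n + 1)" for n
  proof -
    have "card (accepted_patterns k K X (Delta k K (Suc n))) \<le> CARD('a) * card (accepted_patterns k K X (semiball k K [0] n))"
      by (rule p_le_q)
    then have "?p (Suc n) \<le> real (CARD('a) * card (accepted_patterns k K X (semiball k K [0] n)))"
      by (simp only: of_nat_le_iff)
    then have "?p (Suc n) \<le> real CARD('a) * ?q n" by simp
    then have "ln (?p (Suc n)) \<le> ln (real CARD('a) * ?q n)" using pD_pos[of "Suc n"] by (intro ln_mono) auto
    also have "\<dots> = ln (real CARD('a)) + ln (?q n)" using qpos[of n] by (simp add: ln_mult)
    finally have c: "ln (?p (Suc n)) \<le> ln (real CARD('a)) + ln (?q n)" .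
    show ?thesis using c by (intro divide_right_mono) auto
  qed
  have A: "(\<lambda>n. ln (?p n) / real (card (Delta k K n))) \<longlonglongrightarrow> L1" by (rule lim1_p)
  have A': "(\<lambda>n. ln (?p n) / real (n + 1)) \<longlonglongrightarrow> L1" using A by (simp add: card_Delta1)
  have B: "(\<lambda>n. (ln (?p (Suc n)) - ln (real CARD('a))) / real (n + 1)) \<longlonglongrightarrow> L1"
  proof -
    have a1: "(\<lambda>n. ln (?p (Suc n)) / real (card (Delta k K (Suc n)))) \<longlonglongrightarrow> L1" by (rule LIMSEQ_Suc[OF A])
    have a2: "(\<lambda>n. real (Suc (Suc n)) / real (Suc n)) \<longlonglongrightarrow> 1" by (rule LIMSEQ_Suc[OF LIMSEQ_Suc_n_over_n])
    have a3: "(\<lambda>n. ln (real CARD('a)) / real (Suc n)) \<longlonglongrightarrow> 0" by (rule LIMSEQ_Suc[OF lim_const_over_n])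
    have "(\<lambda>n. ln (?p (Suc n)) / real (card (Delta k K (Suc n))) * (real (Suc (Suc n)) / real (Suc n)) - ln (real CARD('a)) / real (Suc n)) \<longlonglongrightarrow> L1 * 1 - 0"
      by (intro tendsto_intros a1 a2 a3)
    moreover have "ln (?p (Suc n)) / real (card (Delta k K (Suc n))) * (real (Suc (Suc n)) / real (Suc n)) - ln (real CARD('a)) / real (Suc n)
       = (ln (?p (Suc n)) - ln (real CARD('a))) / real (n + 1)" for n
    proof -
      have c: "real (card (Delta k K (Suc n))) = real (Suc (Suc n))" using card_Delta1[of "Suc n"] by simp
      have "ln (?p (Suc n)) / real (card (Delta k K (Suc n))) * (real (Suc (Suc n)) / real (Suc n)) = ln (?p (Suc n)) / real (Suc n)"
        unfolding c by (rule dd) simp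
      then show ?thesis by (simp add: diff_divide_distrib)
    qed
    ultimately show ?thesis by simp
  qed
  have "(\<lambda>n. ln (?q n) / real (n + 1)) \<longlonglongrightarrow> L1"
    by (rule tendsto_sandwich[OF always_eventually always_eventually B A']) (use low up in auto)
  then show ?thesis by (simp add: card_semi1)
qed

end
end

lemma kpow_rowsum:
  assumes rowsum: "\<forall>i<k. card {j. j < k \<and> K i j} = m" and i: "i < k"
  shows "(\<Sum>j<k. kpow k K n i j) = m ^ n"
proof (induction n)
  case 0
  have "(\<Sum>j<k. kpow k K 0 i j) = (\<Sum>j<k. if i = j then 1 else 0)" by simp
  also have "\<dots> = 1" using i by (simp add: sum.delta)
  finally show ?case by simp
next
  case (Suc n)
  have "(\<Sum>j<k. kpow k K (Suc n) i j) = (\<Sum>j<k. \<Sum>l<k. kpow k K n i l * (if K l j then 1 else 0))" by simp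
  also have "\<dots> = (\<Sum>l<k. \<Sum>j<k. kpow k K n i l * (if K l j then 1 else 0))" by (rule sum.swap)
  also have "\<dots> = (\<Sum>l<k. kpow k K n i l * (\<Sum>j<k. (if K l j then 1 else 0)))" by (simp add: sum_distrib_left)
  also have "\<dots> = (\<Sum>l<k. kpow k K n i l * m)"
  proof (rule sum.cong[OF refl])
    fix l assume l: "l \<in> {..<k}"
    have "(\<Sum>j<k. (if K l j then 1 else 0 :: nat)) = card {j. j < k \<and> K l j}"
      by (simp add: sum.If_cases Int_def conj_commute)
    then show "kpow k K n i l * (\<Sum>j<k. (if K l j then 1 else 0)) = kpow k K n i l * m" using rowsum l by simp
  qed
  also have "\<dots> = m ^ n * m" using Suc by (simp add: sum_distrib_right[symmetric])
  finally show ?case by simp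
qed

lemma m_pos_lemma:
  assumes prim: "primitive_mat k K" and rowsum: "\<forall>i<k. card {j. j < k \<and> K i j} = m" and k: "0 < k"
  shows "1 \<le> m"
proof (rule ccontr)
  assume "\<not> 1 \<le> m"
  then have m0: "m = 0" by simp
  have nK: "\<not> K l j" if "l < k" "j < k" for l j
  proof
    assume "K l j"
    then have "j \<in> {j. j < k \<and> K l j}" using that by simp
    moreover have "finite {j. j < k \<and> K l j}" by simp
    ultimately have "card {j. j < k \<and> K l j} \<noteq> 0" by (metis card_0_eq empty_iff)
    then show False using rowsum that m0 by simp
  qed
  obtain N where N: "N > 0" "\<forall>i<k. \<forall>j<k. kpow k K N i j > 0" using prim by (auto simp: primitive_mat_def)
  then obtain N' where N': "N = Suc N'" by (cases N) auto
  have "kpow k K N 0 0 = 0" unfolding N' using nK k by simp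
  moreover have "0 < kpow k K N 0 0" using N(2) k by blast
  ultimately show False by simp
qed

lemma k_one_lemma:
  assumes prim: "primitive_mat k K" and rowsum: "\<forall>i<k. card {j. j < k \<and> K i j} = m" and k: "0 < k" and m: "m = 1"
  shows "k = 1"
proof -
  obtain N where N: "N > 0" "\<forall>i<k. \<forall>j<k. kpow k K N i j > 0" using prim by (auto simp: primitive_mat_def)
  have "(\<Sum>j<k. 1) \<le> (\<Sum>j<k. kpow k K N 0 j)" using N(2) k by (intro sum_mono) (simp add: Suc_le_eq)
  also have "\<dots> = 1" using kpow_rowsum[OF rowsum k] m by simp
  finally show ?thesis using k by simp
qed

lemma mts_hom:
  assumes h: "\<forall>i<k. A i = A 0"
  shows "markov_tree_shift k K A = markov_tree_shift k K (\<lambda>_. A 0)"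
proof -
  have eq: "A i x y = A 0 x y" if "i < k" for i x y
  proof -
    from h that have "A i = A 0" by blast
    then show ?thesis by simp
  qed
  show ?thesis unfolding markov_tree_shift_def
  proof (intro Collect_cong iffI ballI allI impI)
    fix t g i assume a: "\<forall>g\<in>sgG k K. \<forall>i<k. length (sgmult K g [i]) = length g + 1 \<longrightarrow> A i (t g) (t (sgmult K g [i]))"
      and g: "g \<in> sgG k K" and i: "i < k" and l: "length (sgmult K g [i]) = length g + 1"
    have "A i (t g) (t (sgmult K g [i]))" using a g i l by blast
    then show "A 0 (t g) (t (sgmult K g [i]))" using eq[OF i] by simp
  next
    fix t g i assume a: "\<forall>g\<in>sgG k K. \<forall>i<k. length (sgmult K g [i]) = length g + 1 \<longrightarrow> A 0 (t g) (t (sgmult K g [i]))"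
      and g: "g \<in> sgG k K" and i: "i < k" and l: "length (sgmult K g [i]) = length g + 1"
    have "A 0 (t g) (t (sgmult K g [i]))" using a g i l by blast
    then show "A i (t g) (t (sgmult K g [i]))" using eq[OF i] by simp
  qed
qed

lemma ereal_goal:
  assumes "P \<longlonglongrightarrow> L" "Q \<longlonglongrightarrow> L"
  shows "(\<lambda>n. ereal (P n)) \<longlonglongrightarrow> limsup (\<lambda>n. ereal (Q n))"
proof -
  have "(\<lambda>n. ereal (Q n)) \<longlonglongrightarrow> ereal L" using assms(2) by (rule tendsto_ereal)
  then have "limsup (\<lambda>n. ereal (Q n)) = ereal L" by (intro lim_imp_Limsup) simp_all
  moreover have "(\<lambda>n. ereal (P n)) \<longlonglongrightarrow> ereal L" using assms(1) by (rule tendsto_ereal)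
  ultimately show ?thesis by simp
qed

theorem theorem4p3:
  fixes k :: nat and K :: "nat \<Rightarrow> nat \<Rightarrow> bool" and m :: nat
    and A :: "nat \<Rightarrow> 'a::finite \<Rightarrow> 'a \<Rightarrow> bool"
  assumes prim: "primitive_mat k K"
    and rowsum: "\<forall>i<k. card {j. j < k \<and> K i j} = m"
    and hom: "\<forall>i<k. A i = A 0"
  shows "\<forall>i<k.
     (\<lambda>n. ereal (ln (real (pn k K (markov_tree_shift k K A) n))
                  / real (card (Delta k K n))))
       \<longlonglongrightarrow> stem_entropy k K (markov_tree_shift k K A) [i]"
proof (intro allI impI)
  fix i assume i: "i < k"
  then have k0: "0 < k" by simp
  have m1: "1 \<le> m" by (rule m_pos_lemma[OF prim rowsum k0])
  interpret T: TS k K m "A 0"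
    by unfold_locales (use k0 rowsum m1 in auto)
  have XX: "markov_tree_shift k K A = T.X"
    unfolding T.X_def by (rule mts_hom[OF hom])
  let ?P = "\<lambda>n. ln (real (pn k K T.X n)) / real (card (Delta k K n))"
  let ?Q = "\<lambda>n. ln (real (pn_semi k K T.X [i] n)) / real (card (semiball k K [i] n))"
  have "\<exists>L. ?P \<longlonglongrightarrow> L \<and> ?Q \<longlonglongrightarrow> L"
  proof (cases "T.X = {}")
    case True
    then have "accepted_patterns k K T.X H = {}" for H by (simp add: accepted_patterns_def)
    then have "?P = (\<lambda>n. 0)" "?Q = (\<lambda>n. 0)" by (auto simp: pn_def pn_semi_def)
    then show ?thesis by auto
  next
    case False
    then obtain t where t: "t \<in> T.X" by auto
    then have E_ne: "T.E \<noteq> {}" using T.X_label_E[OF t sgG_Nil] by auto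
    show ?thesis
    proof (cases "m = 1")
      case True
      have k1: "k = 1" by (rule k_one_lemma[OF prim rowsum k0 True])
      then have i0: "i = 0" using i by simp
      show ?thesis using T.lim1_p[OF k1 False] T.lim1_q[OF k1 False] i0
        by (auto simp: pn_def pn_semi_def)
    next
      case False
      then have m2: "2 \<le> m" using m1 by simp
      show ?thesis using T.lim_p[OF E_ne m2] T.lim_q[OF E_ne m2 i]
        by (auto simp: pn_def pn_semi_def)
    qed
  qed
  then obtain L where L: "?P \<longlonglongrightarrow> L" "?Q \<longlonglongrightarrow> L" by blast
  have "(\<lambda>n. ereal (?P n)) \<longlonglongrightarrow> limsup (\<lambda>n. ereal (?Q n))" by (rule ereal_goal[OF L])
  then show "(\<lambda>n. ereal (ln (real (pn k K (markov_tree_shift k K A) n)) / real (card (Delta k K n))))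
       \<longlonglongrightarrow> stem_entropy k K (markov_tree_shift k K A) [i]"
    unfolding XX stem_entropy_def by simp
qed

end
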